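(* Let $\Sigma$ be a signed graph and let $\mathrm{acyc}_\Sigma(k)$ be the number of acyclic orientations of $\Sigma$ with exactly $k$ sinks. Then $X_\Sigma\in\mathbb{Y}$ and $\phi(X_\Sigma)=\sum_{k\ge0}\mathrm{acyc}_\Sigma(k)t^k$.
   Context: A signed graph $\Sigma$ is a finite graph (loops and multiple edges allowed) with $\mathrm{sgn}:E(\Sigma)\to\{+,-\}$; write $e:uv$ if $e$ has endpoints $u,v$. A coloring $\kappa:V(\Sigma)\to\mathbb{Z}$ is proper if $\kappa(u)\ne\mathrm{sgn}(e)\kappa(v)$ for every edge $e:uv$; $X_\Sigma=\sum_{\kappa\text{ proper}}\prod_{v}x_{\kappa(v)}$ in variables $x_i$, $i\in\mathbb{Z}$. An orientation assigns to each half-edge (a loop has two) an arrow toward or away from the vertex, such that on a positive edge exactly one of the two arrows points toward its vertex and on a negative edge both point toward or both point away. A cycle is a closed walk in which, considering only the edges of the walk, every vertex of the walk has at least one arrow pointing into it and one pointing out of it; an orientation is acyclic if it has no cycle; a sink is a vertex all of whose incident arrows point toward it (an isolated vertex is a sink). A signed poset is an acyclic orientation $P$ of a signed graph. A proper coloring $\kappa$ preserves $P$ if for every edge $e$ and each endpoint $v$ of $e$, with $u$ the other endpoint ($u=v$ for a loop), the arrow of $P$ at the incidence of $e$ with $v$ points toward $v$ iff $\kappa(v)>\mathrm{sgn}(e)\kappa(u)$. $Y_P=\sum_\kappa\prod_v x_{\kappa(v)}$ over proper colorings preserving $P$; $\mathbb{Y}$ is the $\mathbb{Q}$-span of all $Y_P$.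 $\phi:\mathbb{Y}\to\mathbb{Q}[t]$ is the (unique) $\mathbb{Q}$-linear map with $\phi(Y_P)=t^{\mathrm{sink}(P)}$ for every signed poset $P$ (its existence is established in the paper). *)

theory Defs
  imports Main "HOL-Library.Multiset" "HOL-Computational_Algebra.Polynomial"
begin

text \<open>A signed graph: finite vertex set, finite edge set (multiple edges and loops
allowed via edge identifiers), each edge has an (ordered) pair of endpoints
(a loop has equal endpoints) and a sign (True = positive, False = negative).
The two half-edges of an edge e are indexed by a boolean h: the half-edge at
endp G e True = fst (ends G e) and the one at endp G e False = snd (ends G e).\<close>

record ('v, 'e) sgraph =
  verts :: "'v set"
  edges :: "'e set"
  ends  :: "'e \<Rightarrow> 'v \<times> 'v"
  pos   :: "'e \<Rightarrow> bool"

definition wf_sgraph :: "('v, 'e) sgraph \<Rightarrow> bool" where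
  "wf_sgraph G \<longleftrightarrow> finite (verts G) \<and> finite (edges G) \<and>
     (\<forall>e\<in>edges G. fst (ends G e) \<in> verts G \<and> snd (ends G e) \<in> verts G)"

definition endp :: "('v, 'e) sgraph \<Rightarrow> 'e \<Rightarrow> bool \<Rightarrow> 'v" where
  "endp G e h = (if h then fst (ends G e) else snd (ends G e))"

definition sgnmul :: "('v, 'e) sgraph \<Rightarrow> 'e \<Rightarrow> int \<Rightarrow> int" where
  "sgnmul G e x = (if pos G e then x else - x)"

text \<open>An orientation: om e h = True iff the arrow at half-edge h of e points toward
its vertex. Values outside the edge set are fixed to False (canonical form), so
that orientations can be counted.\<close>

definition is_orientation :: "('v, 'e) sgraph \<Rightarrow> ('e \<Rightarrow> bool \<Rightarrow> bool) \<Rightarrow> bool" where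
  "is_orientation G om \<longleftrightarrow>
     (\<forall>e\<in>edges G. (pos G e \<longrightarrow> om e True \<noteq> om e False) \<and>
                   (\<not> pos G e \<longrightarrow> om e True = om e False)) \<and>
     (\<forall>e. e \<notin> edges G \<longrightarrow> om e = (\<lambda>_. False))"

definition closed_walk :: "('v, 'e) sgraph \<Rightarrow> 'v list \<Rightarrow> 'e list \<Rightarrow> bool" where
  "closed_walk G vs es \<longleftrightarrow> length vs = length es \<and> es \<noteq> [] \<and> set es \<subseteq> edges G \<and>
     (\<forall>i<length es. ends G (es ! i) = (vs ! i, vs ! (Suc i mod length es)) \<or>
                     ends G (es ! i) = (vs ! (Suc i mod length es), vs ! i))"

definition is_cycle :: "('v, 'e) sgraph \<Rightarrow> ('e \<Rightarrow> bool \<Rightarrow> bool) \<Rightarrow> 'v list \<Rightarrow> 'e list \<Rightarrow> bool" where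
  "is_cycle G om vs es \<longleftrightarrow> closed_walk G vs es \<and>
     (\<forall>w\<in>set vs. (\<exists>e\<in>set es. \<exists>h. endp G e h = w \<and> om e h) \<and>
                 (\<exists>e\<in>set es. \<exists>h. endp G e h = w \<and> \<not> om e h))"

definition acyclic_orientation :: "('v, 'e) sgraph \<Rightarrow> ('e \<Rightarrow> bool \<Rightarrow> bool) \<Rightarrow> bool" where
  "acyclic_orientation G om \<longleftrightarrow> is_orientation G om \<and> \<not> (\<exists>vs es. is_cycle G om vs es)"

definition signed_poset :: "('v, 'e) sgraph \<Rightarrow> ('e \<Rightarrow> bool \<Rightarrow> bool) \<Rightarrow> bool" where
  "signed_poset G om \<longleftrightarrow> wf_sgraph G \<and> acyclic_orientation G om"

definition sinks :: "('v, 'e) sgraph \<Rightarrow> ('e \<Rightarrow> bool \<Rightarrow> bool) \<Rightarrow> 'v set" where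
  "sinks G om = {v \<in> verts G. \<forall>e\<in>edges G. \<forall>h. endp G e h = v \<longrightarrow> om e h}"

definition acyc :: "('v, 'e) sgraph \<Rightarrow> nat \<Rightarrow> nat" where
  "acyc G k = card {om. acyclic_orientation G om \<and> card (sinks G om) = k}"

definition proper :: "('v, 'e) sgraph \<Rightarrow> ('v \<Rightarrow> int) \<Rightarrow> bool" where
  "proper G \<kappa> \<longleftrightarrow> (\<forall>v. v \<notin> verts G \<longrightarrow> \<kappa> v = 0) \<and>
     (\<forall>e\<in>edges G. \<kappa> (fst (ends G e)) \<noteq> sgnmul G e (\<kappa> (snd (ends G e))))"

definition preserves :: "('v, 'e) sgraph \<Rightarrow> ('e \<Rightarrow> bool \<Rightarrow> bool) \<Rightarrow> ('v \<Rightarrow> int) \<Rightarrow> bool" where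
  "preserves G om \<kappa> \<longleftrightarrow>
     (\<forall>e\<in>edges G. \<forall>h. om e h \<longleftrightarrow> \<kappa> (endp G e h) > sgnmul G e (\<kappa> (endp G e (\<not> h))))"

text \<open>Formal series in the variables x_i (i \<in> \<int>) are represented by their
coefficient functions on monomials; a monomial prod_v x_{kappa v} is the multiset
of colors image_mset kappa (mset_set V).\<close>

type_synonym series = "int multiset \<Rightarrow> rat"

definition monomial_of :: "('v, 'e) sgraph \<Rightarrow> ('v \<Rightarrow> int) \<Rightarrow> int multiset" where
  "monomial_of G \<kappa> = image_mset \<kappa> (mset_set (verts G))"

definition Xfun :: "('v, 'e) sgraph \<Rightarrow> series" where
  "Xfun G m = of_nat (card {\<kappa>. proper G \<kappa> \<and> monomial_of G \<kappa> = m})"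

definition Yfun :: "('v, 'e) sgraph \<Rightarrow> ('e \<Rightarrow> bool \<Rightarrow> bool) \<Rightarrow> series" where
  "Yfun G om m = of_nat (card {\<kappa>. proper G \<kappa> \<and> preserves G om \<kappa> \<and> monomial_of G \<kappa> = m})"

text \<open>Q-linear combinations of Y_P. Every signed poset is isomorphic to one with
vertices and edge labels in nat, so posets over nat suffice to span \<Y>.\<close>

type_synonym poset_term = "rat \<times> (nat, nat) sgraph \<times> (nat \<Rightarrow> bool \<Rightarrow> bool)"

definition is_rep :: "series \<Rightarrow> poset_term list \<Rightarrow> bool" where
  "is_rep f reps \<longleftrightarrow> (\<forall>(c, G, om) \<in> set reps. signed_poset G om) \<and>
     f = (\<lambda>m. \<Sum>(c, G, om) \<leftarrow> reps. c * Yfun G om m)"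

definition YY :: "series set" where
  "YY = {f. \<exists>reps. is_rep f reps}"

text \<open>phi: the Q-linear map with phi(Y_P) = t^sink(P); its value on f \<in> \<Y> is
the value sum c_i t^sink(P_i) common to all representations f = sum c_i Y_{P_i}.\<close>

definition phi :: "series \<Rightarrow> rat poly" where
  "phi f = (THE q. \<forall>reps. is_rep f reps \<longrightarrow>
      q = (\<Sum>(c, G, om) \<leftarrow> reps. monom c (card (sinks G om))))"

end

theory Submission
  imports Defs
begin

lemma endp_T[simp]: "endp G e True = fst (ends G e)" and endp_F[simp]: "endp G e False = snd (ends G e)"
  by (simp_all add: endp_def)

definition EI :: "('v, 'e) sgraph \<Rightarrow> 'v set \<Rightarrow> 'e set" where
  "EI G U = {e\<in>edges G. fst (ends G e) \<in> U \<and> snd (ends G e) \<in> U}"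

lemma EI_endp: "e \<in> EI G U \<Longrightarrow> endp G e h \<in> U"
  by (cases h) (auto simp: EI_def)

lemma orient_pos: "is_orientation G om \<Longrightarrow> e \<in> edges G \<Longrightarrow> pos G e \<Longrightarrow> om e (\<not> h) = (\<not> om e h)"
  unfolding is_orientation_def by (cases h) auto

lemma orient_neg: "is_orientation G om \<Longrightarrow> e \<in> edges G \<Longrightarrow> \<not> pos G e \<Longrightarrow> om e (\<not> h) = om e h"
  unfolding is_orientation_def by (cases h) auto

lemma noSS:
  assumes ac: "acyclic_orientation G om" and fin: "finite U" and ne: "EI G U \<noteq> {}"
  shows "\<exists>v\<in>U. (\<exists>e\<in>EI G U. \<exists>h. endp G e h = v) \<and>
           ((\<forall>e\<in>EI G U. \<forall>h. endp G e h = v \<longrightarrow> om e h) \<or> (\<forall>e\<in>EI G U. \<forall>h. endp G e h = v \<longrightarrow> \<not> om e h))"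
proof (rule ccontr)
  define F where "F = EI G U"
  assume "\<not> ?thesis"
  hence H: "\<And>v. v \<in> U \<Longrightarrow> (\<exists>e\<in>F. \<exists>h. endp G e h = v) \<Longrightarrow> \<forall>\<tau>. \<exists>e\<in>F. \<exists>h. endp G e h = v \<and> om e h = \<tau>"
    unfolding F_def by blast
  define Vs where "Vs = {(v, \<tau>::bool). v \<in> U \<and> (\<exists>e\<in>F. \<exists>h. endp G e h = v)}"
  define ch where "ch = (\<lambda>s::'a \<times> bool. SOME p::'b \<times> bool. fst p \<in> F \<and> endp G (fst p) (snd p) = fst s \<and> om (fst p) (snd p) = (\<not> snd s))"
  define nx where "nx = (\<lambda>s. (endp G (fst (ch s)) (\<not> snd (ch s)), om (fst (ch s)) (\<not> snd (ch s))))"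
  have ch: "fst (ch s) \<in> F \<and> endp G (fst (ch s)) (snd (ch s)) = fst s \<and> om (fst (ch s)) (snd (ch s)) = (\<not> snd s)"
    if "s \<in> Vs" for s
  proof -
    obtain v \<tau> where s: "s = (v, \<tau>)" by fastforce
    from that H[of v] obtain e h where "e \<in> F" "endp G e h = v" "om e h = (\<not> \<tau>)"
      unfolding Vs_def s by blast
    hence ex: "\<exists>p. fst p \<in> F \<and> endp G (fst p) (snd p) = v \<and> om (fst p) (snd p) = (\<not> \<tau>)"
      by (intro exI[of _ "(e,h)"]) simp
    show ?thesis unfolding ch_def s fst_conv snd_conv by (rule someI_ex[OF ex])
  qed
  have nxV: "nx s \<in> Vs" if "s \<in> Vs" for s
  proof -
    have eF: "fst (ch s) \<in> F" using ch[OF that] by blast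
    hence "endp G (fst (ch s)) (\<not> snd (ch s)) \<in> U" unfolding F_def by (rule EI_endp)
    thus ?thesis using eF unfolding nx_def Vs_def by auto
  qed
  obtain e0 where e0: "e0 \<in> F" using ne F_def by blast
  define s0 where "s0 = (fst (ends G e0), True)"
  have s0: "s0 \<in> Vs"
  proof -
    have "endp G e0 True = fst (ends G e0)" by simp
    moreover have "fst (ends G e0) \<in> U" using EI_endp[of e0 G U True] e0 F_def by simp
    ultimately show ?thesis unfolding s0_def Vs_def using e0 by blast
  qed
  define st where "st = (\<lambda>i. (nx ^^ i) s0)"
  have stV: "st i \<in> Vs" for i
    by (induction i) (auto simp: st_def s0 nxV)
  have stS: "st (Suc i) = nx (st i)" for i by (simp add: st_def)
  have finVs: "finite Vs"
    by (rule finite_subset[of _ "U \<times> UNIV"]) (auto simp: Vs_def fin)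
  have "\<not> inj_on st {..card Vs}"
  proof
    assume "inj_on st {..card Vs}"
    moreover have "st ` {..card Vs} \<subseteq> Vs" using stV by auto
    ultimately have "card {..card Vs} \<le> card Vs" using card_inj_on_le finVs by blast
    thus False by simp
  qed
  then obtain a b where ab: "a \<noteq> b" "st a = st b"
    unfolding inj_on_def by blast
  obtain i j where ij: "i < j" "st i = st j"
  proof (cases "a < b")
    case True thus ?thesis using that ab by blast
  next
    case False hence "b < a" using ab by simp
    thus ?thesis using that ab by metis
  qed
  define k where "k = j - i"
  have k0: "k > 0" using ij k_def by simp
  have per: "st (i + k) = st i" using ij k_def by simp
  define vs where "vs = map (\<lambda>m. fst (st (i + m))) [0..<k]"
  define es where "es = map (\<lambda>m. fst (ch (st (i + m)))) [0..<k]"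
  define hs where "hs = (\<lambda>m. snd (ch (st (i + m))))"
  have chm: "fst (ch (st (i+m))) \<in> F" "endp G (fst (ch (st (i+m)))) (hs m) = fst (st (i+m))"
     "om (fst (ch (st (i+m)))) (hs m) = (\<not> snd (st (i+m)))" for m
    using ch[OF stV[of "i+m"]] hs_def by auto
  have nxm: "endp G (fst (ch (st (i+m)))) (\<not> hs m) = fst (st (i+Suc m))"
     "om (fst (ch (st (i+m)))) (\<not> hs m) = snd (st (i+Suc m))" for m
    using stS[of "i+m"] unfolding nx_def hs_def by auto
  have Fsub: "F \<subseteq> edges G" unfolding F_def EI_def by auto
  have nxt: "fst (st (i + Suc m)) = vs ! (Suc m mod k)" if "m < k" for m
  proof (cases "Suc m < k")
    case True thus ?thesis by (simp add: vs_def)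
  next
    case False
    hence "Suc m = k" using that by simp
    thus ?thesis using per k0 by (simp add: vs_def)
  qed
  have cw: "closed_walk G vs es"
    unfolding closed_walk_def
  proof (intro conjI allI impI)
    show "length vs = length es" "es \<noteq> []" using k0 by (auto simp: vs_def es_def)
    show "set es \<subseteq> edges G" using chm(1) Fsub by (auto simp: es_def)
    fix m assume "m < length es"
    hence m: "m < k" by (simp add: es_def)
    have a: "endp G (es ! m) (hs m) = vs ! m" using chm(2)[of m] m by (simp add: es_def vs_def)
    have b: "endp G (es ! m) (\<not> hs m) = vs ! (Suc m mod length es)"
      using nxm(1)[of m] nxt[OF m] m by (simp add: es_def)
    show "ends G (es ! m) = (vs ! m, vs ! (Suc m mod length es)) \<or>
          ends G (es ! m) = (vs ! (Suc m mod length es), vs ! m)"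
      using a b by (cases "hs m") (auto simp: prod_eq_iff)
  qed
  have "is_cycle G om vs es"
    unfolding is_cycle_def
  proof (intro conjI cw ballI)
    fix w assume "w \<in> set vs"
    then obtain m where m: "m < k" and w: "w = fst (st (i + m))" by (auto simp: vs_def)
    have out: "\<exists>e\<in>set es. \<exists>h. endp G e h = w \<and> om e h = (\<not> snd (st (i+m)))"
      using chm(2,3)[of m] m w by (auto simp: es_def)
    have inn: "\<exists>e\<in>set es. \<exists>h. endp G e h = w \<and> om e h = snd (st (i+m))"
    proof (cases m)
      case 0
      define m' where "m' = k - 1"
      have m'k: "m' < k" "i + Suc m' = i + k" using k0 by (auto simp: m'_def)
      have mem: "fst (ch (st (i + m'))) \<in> set es" using m'k(1) by (auto simp: es_def)
      have "endp G (fst (ch (st (i + m')))) (\<not> hs m') = w \<and> om (fst (ch (st (i + m')))) (\<not> hs m') = snd (st (i+m))"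
      proof -
        have "st (i + Suc m') = st i" using m'k(2) per by simp
        thus ?thesis using nxm[of m'] w 0 by simp
      qed
      thus ?thesis using mem by blast
    next
      case (Suc m')
      have mem: "fst (ch (st (i + m'))) \<in> set es" using m Suc by (auto simp: es_def)
      have "endp G (fst (ch (st (i + m')))) (\<not> hs m') = w \<and> om (fst (ch (st (i + m')))) (\<not> hs m') = snd (st (i+m))"
        using nxm[of m'] w Suc by simp
      thus ?thesis using mem by blast
    qed
    show "\<exists>e\<in>set es. \<exists>h. endp G e h = w \<and> om e h" using out inn by (cases "snd (st (i+m))") auto
    show "\<exists>e\<in>set es. \<exists>h. endp G e h = w \<and> \<not> om e h" using out inn by (cases "snd (st (i+m))") auto
  qed
  thus False using ac unfolding acyclic_orientation_def by blast
qed

definition good :: "('v, 'e) sgraph \<Rightarrow> ('e \<Rightarrow> bool \<Rightarrow> bool) \<Rightarrow> 'v set \<Rightarrow> ('v \<Rightarrow> int) \<Rightarrow> bool" where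
  "good G om U \<kappa> \<longleftrightarrow> (\<forall>v. v \<notin> U \<longrightarrow> \<kappa> v = 0) \<and>
     (\<forall>e\<in>EI G U. \<kappa> (fst (ends G e)) \<noteq> sgnmul G e (\<kappa> (snd (ends G e))) \<and>
        (\<forall>h. om e h \<longleftrightarrow> \<kappa> (endp G e h) > sgnmul G e (\<kappa> (endp G e (\<not> h)))))"

definition lev :: "'v set \<Rightarrow> ('v \<Rightarrow> int) \<Rightarrow> int" where
  "lev U \<kappa> = Max (insert 0 ((\<lambda>v. \<bar>\<kappa> v\<bar>) ` U))"

definition packed :: "'v set \<Rightarrow> ('v \<Rightarrow> int) \<Rightarrow> bool" where
  "packed U \<kappa> \<longleftrightarrow> (\<forall>j. 1 \<le> j \<longrightarrow> j \<le> lev U \<kappa> \<longrightarrow> (\<exists>v\<in>U. \<bar>\<kappa> v\<bar> = j))"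

definition PK :: "('v, 'e) sgraph \<Rightarrow> ('e \<Rightarrow> bool \<Rightarrow> bool) \<Rightarrow> 'v set \<Rightarrow> ('v \<Rightarrow> int) set" where
  "PK G om U = {\<kappa>. good G om U \<kappa> \<and> packed U \<kappa>}"

definition sinkU :: "('v, 'e) sgraph \<Rightarrow> ('e \<Rightarrow> bool \<Rightarrow> bool) \<Rightarrow> 'v set \<Rightarrow> 'v set" where
  "sinkU G om U = {v\<in>U. \<forall>e\<in>EI G U. \<forall>h. endp G e h = v \<longrightarrow> om e h}"

definition srcU :: "('v, 'e) sgraph \<Rightarrow> ('e \<Rightarrow> bool \<Rightarrow> bool) \<Rightarrow> 'v set \<Rightarrow> 'v set" where
  "srcU G om U = {v\<in>U. \<forall>e\<in>EI G U. \<forall>h. endp G e h = v \<longrightarrow> \<not> om e h}"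

definition PS :: "'v set \<Rightarrow> 'v set \<Rightarrow> ('v set \<times> 'v set) set" where
  "PS X Y = {(S, B). S \<subseteq> X \<and> B \<subseteq> Y \<and> S \<inter> B = {}}"

definition P1 :: "('v, 'e) sgraph \<Rightarrow> ('e \<Rightarrow> bool \<Rightarrow> bool) \<Rightarrow> 'v set \<Rightarrow> ('v set \<times> 'v set) set" where
  "P1 G om U = PS (sinkU G om U) (srcU G om U) - {({}, {})}"

definition extL :: "'v set \<Rightarrow> 'v set \<Rightarrow> int \<Rightarrow> ('v \<Rightarrow> int) \<Rightarrow> 'v \<Rightarrow> int" where
  "extL S B L \<kappa> = (\<lambda>v. if v \<in> S then L else if v \<in> B then - L else \<kappa> v)"

definition topS :: "'v set \<Rightarrow> ('v \<Rightarrow> int) \<Rightarrow> 'v set" where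
  "topS U \<kappa> = {v\<in>U. \<kappa> v = lev U \<kappa>}"

definition topB :: "'v set \<Rightarrow> ('v \<Rightarrow> int) \<Rightarrow> 'v set" where
  "topB U \<kappa> = {v\<in>U. \<kappa> v = - lev U \<kappa>}"

definition rest :: "'v set \<Rightarrow> ('v \<Rightarrow> int) \<Rightarrow> 'v \<Rightarrow> int" where
  "rest U \<kappa> = (\<lambda>v. if v \<in> topS U \<kappa> \<union> topB U \<kappa> then 0 else \<kappa> v)"

definition EE :: "('v, 'e) sgraph \<Rightarrow> ('e \<Rightarrow> bool \<Rightarrow> bool) \<Rightarrow> 'v set \<Rightarrow> int" where
  "EE G om U = (\<Sum>\<kappa>\<in>PK G om U. (-1::int) ^ nat (lev U \<kappa>))"

lemma lev_ge: "finite U \<Longrightarrow> v \<in> U \<Longrightarrow> \<bar>\<kappa> v\<bar> \<le> lev U \<kappa>"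
  unfolding lev_def by (intro Max_ge) auto

lemma lev_nonneg: "finite U \<Longrightarrow> 0 \<le> lev U \<kappa>"
  unfolding lev_def by (intro Max_ge) auto

lemma lev_attained: "finite U \<Longrightarrow> lev U \<kappa> \<noteq> 0 \<Longrightarrow> \<exists>v\<in>U. \<bar>\<kappa> v\<bar> = lev U \<kappa>"
  unfolding lev_def using Max_in[of "insert 0 ((\<lambda>v. \<bar>\<kappa> v\<bar>) ` U)"] by auto

lemma lev_le: "finite U \<Longrightarrow> (\<And>v. v \<in> U \<Longrightarrow> \<bar>\<kappa> v\<bar> \<le> L) \<Longrightarrow> 0 \<le> L \<Longrightarrow> lev U \<kappa> \<le> L"
  unfolding lev_def by (subst Max_le_iff) auto

lemma lev_eqI: "finite U \<Longrightarrow> (\<And>v. v \<in> U \<Longrightarrow> \<bar>\<kappa> v\<bar> \<le> L) \<Longrightarrow> 0 \<le> L \<Longrightarrow> (L \<noteq> 0 \<Longrightarrow> \<exists>v\<in>U. \<bar>\<kappa> v\<bar> = L) \<Longrightarrow> lev U \<kappa> = L"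
  by (metis antisym lev_ge lev_le lev_nonneg)

lemma lev_packed_card:
  assumes "finite U" "packed U \<kappa>" shows "lev U \<kappa> \<le> int (card U)"
proof -
  have "{1..lev U \<kappa>} \<subseteq> (\<lambda>v. \<bar>\<kappa> v\<bar>) ` U" using assms(2) unfolding packed_def by force
  hence "card {1..lev U \<kappa>} \<le> card ((\<lambda>v. \<bar>\<kappa> v\<bar>) ` U)" using assms(1) by (intro card_mono) auto
  also have "\<dots> \<le> card U" using assms(1) by (rule card_image_le)
  finally show ?thesis by simp
qed

lemma finite_PK: assumes "finite U" shows "finite (PK G om U)"
proof -
  let ?c = "int (card U)"
  have "PK G om U \<subseteq> {\<kappa>. \<forall>x. (x \<in> U \<longrightarrow> \<kappa> x \<in> {-?c..?c}) \<and> (x \<notin> U \<longrightarrow> \<kappa> x = 0)}"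
  proof (safe)
    fix \<kappa> x assume k: "\<kappa> \<in> PK G om U"
    { assume "x \<in> U"
      hence "\<bar>\<kappa> x\<bar> \<le> ?c" using lev_ge[OF assms, of x \<kappa>] lev_packed_card[OF assms, of \<kappa>] k
        unfolding PK_def by auto
      thus "\<kappa> x \<in> {-?c..?c}" by auto }
    { assume "x \<notin> U" thus "\<kappa> x = 0" using k unfolding PK_def good_def by auto }
  qed
  thus ?thesis by (rule finite_subset) (intro finite_set_of_finite_funs assms; simp)
qed

lemma sgnmul_abs: "\<bar>sgnmul G e x\<bar> = \<bar>x\<bar>" by (simp add: sgnmul_def)

lemma proper_sym: "\<kappa> (fst (ends G e)) \<noteq> sgnmul G e (\<kappa> (snd (ends G e))) \<Longrightarrow>
   \<kappa> (endp G e h) \<noteq> sgnmul G e (\<kappa> (endp G e (\<not> h)))"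
  by (cases h) (auto simp: sgnmul_def)

lemma good_half:
  assumes "good G om U \<kappa>" "e \<in> EI G U"
  shows "\<kappa> (endp G e h) \<noteq> sgnmul G e (\<kappa> (endp G e (\<not> h)))"
    "om e h \<longleftrightarrow> \<kappa> (endp G e h) > sgnmul G e (\<kappa> (endp G e (\<not> h)))"
proof -
  have p: "\<kappa> (fst (ends G e)) \<noteq> sgnmul G e (\<kappa> (snd (ends G e)))"
    and o: "\<forall>h. om e h \<longleftrightarrow> \<kappa> (endp G e h) > sgnmul G e (\<kappa> (endp G e (\<not> h)))"
    using assms unfolding good_def by auto
  from p show "\<kappa> (endp G e h) \<noteq> sgnmul G e (\<kappa> (endp G e (\<not> h)))" by (rule proper_sym)
  show "om e h \<longleftrightarrow> \<kappa> (endp G e h) > sgnmul G e (\<kappa> (endp G e (\<not> h)))" using o by blast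
qed

lemma topS_sink:
  assumes U: "finite U" and k: "good G om U \<kappa>"
  shows "topS U \<kappa> \<subseteq> sinkU G om U"
proof
  fix v assume v: "v \<in> topS U \<kappa>"
  have "om e h" if e: "e \<in> EI G U" and h: "endp G e h = v" for e h
  proof -
    have u: "endp G e (\<not> h) \<in> U" using EI_endp[OF e] .
    have "\<bar>sgnmul G e (\<kappa> (endp G e (\<not> h)))\<bar> \<le> lev U \<kappa>" using lev_ge[OF U u] by (simp only: sgnmul_abs)
    moreover have "\<kappa> v \<noteq> sgnmul G e (\<kappa> (endp G e (\<not> h)))" using good_half(1)[OF k e, of h] h by simp
    moreover have "\<kappa> v = lev U \<kappa>" using v by (simp add: topS_def)
    ultimately show ?thesis using good_half(2)[OF k e, of h] h by simp
  qed
  moreover have "v \<in> U" using v by (simp add: topS_def)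
  ultimately show "v \<in> sinkU G om U" unfolding sinkU_def by blast
qed

lemma topB_src:
  assumes U: "finite U" and k: "good G om U \<kappa>"
  shows "topB U \<kappa> \<subseteq> srcU G om U"
proof
  fix v assume v: "v \<in> topB U \<kappa>"
  have "\<not> om e h" if e: "e \<in> EI G U" and h: "endp G e h = v" for e h
  proof -
    have u: "endp G e (\<not> h) \<in> U" using EI_endp[OF e] .
    have "\<bar>sgnmul G e (\<kappa> (endp G e (\<not> h)))\<bar> \<le> lev U \<kappa>" using lev_ge[OF U u] by (simp only: sgnmul_abs)
    moreover have "\<kappa> v = - lev U \<kappa>" using v by (simp add: topB_def)
    ultimately show ?thesis using good_half(2)[OF k e, of h] h by simp
  qed
  moreover have "v \<in> U" using v by (simp add: topB_def)
  ultimately show "v \<in> srcU G om U" unfolding srcU_def by blast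
qed

lemma ext_arith:
  fixes L kx ky :: int
  assumes "L \<ge> 1" "\<not>(xS \<and> xB)" "\<not>(yS \<and> yB)" "xS \<longrightarrow> o1" "xB \<longrightarrow> \<not>o1" "yS \<longrightarrow> o2" "yB \<longrightarrow> \<not>o2"
    "p \<longrightarrow> o2 = (\<not>o1)" "\<not>p \<longrightarrow> o2 = o1"
    "\<not>xS \<and> \<not>xB \<longrightarrow> 1-L \<le> kx \<and> kx \<le> L-1" "\<not>yS \<and> \<not>yB \<longrightarrow> 1-L \<le> ky \<and> ky \<le> L-1" "xS \<or> xB \<or> yS \<or> yB"
  shows "(if xS then L else if xB then -L else kx) \<noteq> (if p then (if yS then L else if yB then -L else ky) else - (if yS then L else if yB then -L else ky))
     \<and> (o1 \<longleftrightarrow> (if xS then L else if xB then -L else kx) > (if p then (if yS then L else if yB then -L else ky) else - (if yS then L else if yB then -L else ky)))"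
  using assms by (cases p; cases xS; cases xB; cases yS; cases yB; cases o1; simp; linarith?)

lemma rest_PK:
  assumes U: "finite U" and k: "\<kappa> \<in> PK G om U" and L: "lev U \<kappa> \<ge> 1"
  shows "rest U \<kappa> \<in> PK G om (U - topS U \<kappa> - topB U \<kappa>)"
    "lev (U - topS U \<kappa> - topB U \<kappa>) (rest U \<kappa>) = lev U \<kappa> - 1"
    "extL (topS U \<kappa>) (topB U \<kappa>) (lev U \<kappa>) (rest U \<kappa>) = \<kappa>"
proof -
  define W where "W = U - topS U \<kappa> - topB U \<kappa>"
  have kg: "good G om U \<kappa>" and kp: "packed U \<kappa>" using k by (auto simp: PK_def)
  have rW: "rest U \<kappa> v = \<kappa> v" if "v \<in> W" for v using that by (auto simp: W_def rest_def)
  have bW: "\<bar>\<kappa> v\<bar> \<le> lev U \<kappa> - 1" if "v \<in> W" for v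
  proof -
    have "v \<in> U" "\<kappa> v \<noteq> lev U \<kappa>" "\<kappa> v \<noteq> - lev U \<kappa>" using that by (auto simp: W_def topS_def topB_def)
    thus ?thesis using lev_ge[OF U, of v \<kappa>] by auto
  qed
  have finW: "finite W" using U by (simp add: W_def)
  have levW: "lev W (rest U \<kappa>) = lev U \<kappa> - 1"
  proof (rule lev_eqI[OF finW])
    show "\<bar>rest U \<kappa> v\<bar> \<le> lev U \<kappa> - 1" if "v \<in> W" for v using bW[OF that] rW[OF that] by simp
    show "0 \<le> lev U \<kappa> - 1" using L by simp
    assume "lev U \<kappa> - 1 \<noteq> 0"
    hence "1 \<le> lev U \<kappa> - 1" using L by simp
    hence "\<exists>v\<in>U. \<bar>\<kappa> v\<bar> = lev U \<kappa> - 1" by (intro kp[unfolded packed_def, rule_format]) simp_all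
    then obtain v where v: "v \<in> U" "\<bar>\<kappa> v\<bar> = lev U \<kappa> - 1" by blast
    hence "v \<in> W" by (auto simp: W_def topS_def topB_def)
    thus "\<exists>v\<in>W. \<bar>rest U \<kappa> v\<bar> = lev U \<kappa> - 1" using v rW by force
  qed
  have EIW: "EI G W \<subseteq> EI G U" by (auto simp: EI_def W_def)
  have good: "good G om W (rest U \<kappa>)"
    unfolding good_def
  proof (intro conjI allI impI ballI)
    fix v assume "v \<notin> W"
    thus "rest U \<kappa> v = 0" using kg by (auto simp: W_def rest_def good_def)
  next
    fix e assume e: "e \<in> EI G W"
    have eU: "e \<in> EI G U" using e EIW by blast
    have ep: "rest U \<kappa> (endp G e h) = \<kappa> (endp G e h)" for h using rW EI_endp[OF e] by blast
    show "rest U \<kappa> (fst (ends G e)) \<noteq> sgnmul G e (rest U \<kappa> (snd (ends G e)))"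
      using ep[of True] ep[of False] good_half(1)[OF kg eU, of True] by simp
    fix h
    show "om e h = (sgnmul G e (rest U \<kappa> (endp G e (\<not> h))) < rest U \<kappa> (endp G e h))"
      using ep[of h] ep[of "\<not>h"] good_half(2)[OF kg eU, of h] by simp
  qed
  have packed: "packed W (rest U \<kappa>)"
    unfolding packed_def levW
  proof (intro allI impI)
    fix j :: int assume j: "1 \<le> j" "j \<le> lev U \<kappa> - 1"
    hence "\<exists>v\<in>U. \<bar>\<kappa> v\<bar> = j" by (intro kp[unfolded packed_def, rule_format]) simp_all
    then obtain v where v: "v \<in> U" "\<bar>\<kappa> v\<bar> = j" by blast
    hence "v \<in> W" using j by (auto simp: W_def topS_def topB_def)
    thus "\<exists>v\<in>W. \<bar>rest U \<kappa> v\<bar> = j" using v rW by force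
  qed
  show "rest U \<kappa> \<in> PK G om (U - topS U \<kappa> - topB U \<kappa>)" using good packed by (simp add: PK_def W_def)
  show "lev (U - topS U \<kappa> - topB U \<kappa>) (rest U \<kappa>) = lev U \<kappa> - 1" using levW by (simp add: W_def)
  show "extL (topS U \<kappa>) (topB U \<kappa>) (lev U \<kappa>) (rest U \<kappa>) = \<kappa>"
    by (rule ext) (auto simp: extL_def rest_def topS_def topB_def)
qed

lemma ext_PK:
  assumes U: "finite U" and ori: "is_orientation G om" and p: "(S, B) \<in> P1 G om U"
    and k': "\<kappa>' \<in> PK G om (U - S - B)"
  defines "L \<equiv> lev (U - S - B) \<kappa>' + 1"
  shows "extL S B L \<kappa>' \<in> PK G om U" "lev U (extL S B L \<kappa>') = L"
    "topS U (extL S B L \<kappa>') = S" "topB U (extL S B L \<kappa>') = B" "rest U (extL S B L \<kappa>') = \<kappa>'"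
proof -
  define \<kappa> where "\<kappa> = extL S B L \<kappa>'"
  have SB: "S \<subseteq> sinkU G om U" "B \<subseteq> srcU G om U" "S \<inter> B = {}" "S \<union> B \<noteq> {}"
    using p by (auto simp: P1_def PS_def)
  hence SBU: "S \<subseteq> U" "B \<subseteq> U" by (auto simp: sinkU_def srcU_def)
  have kg: "good G om (U - S - B) \<kappa>'" and kp: "packed (U - S - B) \<kappa>'" using k' by (auto simp: PK_def)
  have finW: "finite (U - S - B)" using U by simp
  have L1: "L \<ge> 1" using lev_nonneg[OF finW] by (simp add: L_def)
  have bW: "\<bar>\<kappa>' v\<bar> \<le> L - 1" if "v \<in> U - S - B" for v using lev_ge[OF finW that] by (simp add: L_def)
  have out: "\<kappa>' v = 0" if "v \<notin> U - S - B" for v using kg that by (simp add: good_def)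
  have kS: "\<kappa> v = L" if "v \<in> S" for v using that by (simp add: \<kappa>_def extL_def)
  have kB: "\<kappa> v = - L" if "v \<in> B" for v using that SB(3) by (auto simp: \<kappa>_def extL_def)
  have kR: "\<kappa> v = \<kappa>' v" if "v \<notin> S" "v \<notin> B" for v using that by (simp add: \<kappa>_def extL_def)
  have lev: "lev U \<kappa> = L"
  proof (rule lev_eqI[OF U])
    fix v assume "v \<in> U" thus "\<bar>\<kappa> v\<bar> \<le> L" using bW[of v] kS kB kR L1 by (cases "v \<in> S"; cases "v \<in> B") auto
  next
    show "0 \<le> L" using L1 by simp
    obtain v where "v \<in> S \<union> B" using SB(4) by blast
    thus "\<exists>v\<in>U. \<bar>\<kappa> v\<bar> = L" using kS kB SBU L1 by (intro bexI[of _ v]) auto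
  qed
  have good: "good G om U \<kappa>"
    unfolding good_def
  proof (intro conjI allI impI ballI)
    fix v assume vU: "v \<notin> U"
    hence "v \<notin> S" "v \<notin> B" using SBU by auto
    moreover have "\<kappa>' v = 0" using vU by (intro out) simp
    ultimately show "\<kappa> v = 0" using kR by simp
  next
    fix e assume e: "e \<in> EI G U"
    have eE: "e \<in> edges G" using e by (simp add: EI_def)
    have claim: "\<kappa> (endp G e h) \<noteq> sgnmul G e (\<kappa> (endp G e (\<not> h))) \<and>
                 (om e h \<longleftrightarrow> \<kappa> (endp G e h) > sgnmul G e (\<kappa> (endp G e (\<not> h))))" for h
    proof (cases "endp G e h \<in> S \<union> B \<or> endp G e (\<not> h) \<in> S \<union> B")
      case False
      hence "e \<in> EI G (U - S - B)" using e EI_endp[OF e, of True] EI_endp[OF e, of False]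
        by (cases h) (auto simp: EI_def)
      thus ?thesis using good_half[OF kg, of e h] kR False by auto
    next
      case True
      let ?x = "endp G e h" and ?y = "endp G e (\<not> h)"
      have xU: "?x \<in> U" and yU: "?y \<in> U" using EI_endp[OF e] by auto
      have xS: "?x \<in> S \<longrightarrow> om e h" using SB(1) e by (auto simp: sinkU_def)
      have xB: "?x \<in> B \<longrightarrow> \<not> om e h" using SB(2) e by (auto simp: srcU_def)
      have yS: "?y \<in> S \<longrightarrow> om e (\<not> h)" using SB(1) e by (auto simp: sinkU_def)
      have yB: "?y \<in> B \<longrightarrow> \<not> om e (\<not> h)" using SB(2) e by (auto simp: srcU_def)
      have po: "pos G e \<longrightarrow> om e (\<not> h) = (\<not> om e h)" using orient_pos[OF ori eE] by blast
      have ne: "\<not> pos G e \<longrightarrow> om e (\<not> h) = om e h" using orient_neg[OF ori eE] by blast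
      have bx: "\<not> ?x \<in> S \<and> \<not> ?x \<in> B \<longrightarrow> 1 - L \<le> \<kappa>' ?x \<and> \<kappa>' ?x \<le> L - 1" using bW[of ?x] xU by auto
      have by': "\<not> ?y \<in> S \<and> \<not> ?y \<in> B \<longrightarrow> 1 - L \<le> \<kappa>' ?y \<and> \<kappa>' ?y \<le> L - 1" using bW[of ?y] yU by auto
      have d: "\<not> (?x \<in> S \<and> ?x \<in> B)" "\<not> (?y \<in> S \<and> ?y \<in> B)" using SB(3) by auto
      have tt: "?x \<in> S \<or> ?x \<in> B \<or> ?y \<in> S \<or> ?y \<in> B" using True by auto
      have kx: "\<kappa> ?x = (if ?x \<in> S then L else if ?x \<in> B then -L else \<kappa>' ?x)"
       and ky: "\<kappa> ?y = (if ?y \<in> S then L else if ?y \<in> B then -L else \<kappa>' ?y)"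
        using SB(3) by (auto simp: \<kappa>_def extL_def)
      show ?thesis unfolding kx ky sgnmul_def
        by (rule ext_arith[OF L1 d(1) d(2) xS xB yS yB po ne bx by' tt])
    qed
    show "\<kappa> (fst (ends G e)) \<noteq> sgnmul G e (\<kappa> (snd (ends G e)))" using claim[of True] by simp
    fix h show "om e h = (sgnmul G e (\<kappa> (endp G e (\<not> h))) < \<kappa> (endp G e h))" using claim[of h] by blast
  qed
  have packed: "packed U \<kappa>"
    unfolding packed_def lev
  proof (intro allI impI)
    fix j :: int assume j: "1 \<le> j" "j \<le> L"
    show "\<exists>v\<in>U. \<bar>\<kappa> v\<bar> = j"
    proof (cases "j = L")
      case True
      obtain v where "v \<in> S \<union> B" using SB(4) by blast
      thus ?thesis using kS kB SBU L1 True by (intro bexI[of _ v]) auto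
    next
      case False
      hence "j \<le> lev (U - S - B) \<kappa>'" using j by (simp add: L_def)
      then obtain v where "v \<in> U - S - B" "\<bar>\<kappa>' v\<bar> = j" using kp j unfolding packed_def by blast
      thus ?thesis using kR by (intro bexI[of _ v]) auto
    qed
  qed
  show "extL S B L \<kappa>' \<in> PK G om U" using good packed by (simp add: PK_def \<kappa>_def)
  show "lev U (extL S B L \<kappa>') = L" using lev by (simp add: \<kappa>_def)
  have tS: "topS U \<kappa> = S"
  proof -
    have "{v\<in>U. \<kappa> v = L} = S"
    proof (intro equalityI subsetI)
      fix v assume "v \<in> {v\<in>U. \<kappa> v = L}"
      hence v: "v \<in> U" "\<kappa> v = L" by auto
      show "v \<in> S"
      proof (rule ccontr)
        assume "v \<notin> S"
        moreover have "v \<notin> B"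
        proof
          assume "v \<in> B" hence "\<kappa> v = - L" by (rule kB)
          thus False using v L1 by simp
        qed
        ultimately have "\<kappa> v = \<kappa>' v" "v \<in> U - S - B" using kR v by auto
        thus False using bW[of v] v by simp
      qed
    qed (use SBU kS in auto)
    thus ?thesis using lev by (simp add: topS_def)
  qed
  have tB: "topB U \<kappa> = B"
  proof -
    have "{v\<in>U. \<kappa> v = - L} = B"
    proof (intro equalityI subsetI)
      fix v assume "v \<in> {v\<in>U. \<kappa> v = - L}"
      hence v: "v \<in> U" "\<kappa> v = - L" by auto
      show "v \<in> B"
      proof (rule ccontr)
        assume "v \<notin> B"
        moreover have "v \<notin> S"
        proof
          assume "v \<in> S" hence "\<kappa> v = L" by (rule kS)
          thus False using v L1 by simp
        qed
        ultimately have "\<kappa> v = \<kappa>' v" "v \<in> U - S - B" using kR v by auto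
        thus False using bW[of v] v by simp
      qed
    qed (use SBU kB in auto)
    thus ?thesis using lev by (simp add: topB_def)
  qed
  show "topS U (extL S B L \<kappa>') = S" "topB U (extL S B L \<kappa>') = B" using tS tB by (simp_all add: \<kappa>_def)
  show "rest U (extL S B L \<kappa>') = \<kappa>'"
  proof (rule ext)
    fix v
    show "rest U (extL S B L \<kappa>') v = \<kappa>' v"
    proof (cases "v \<in> S \<union> B")
      case True
      hence "\<kappa>' v = 0" by (intro out) simp
      thus ?thesis using True tS tB unfolding rest_def \<kappa>_def[symmetric] by simp
    next
      case False
      thus ?thesis using tS tB kR unfolding rest_def \<kappa>_def[symmetric] by simp
    qed
  qed
qed

definition wPS :: "'v set \<times> 'v set \<Rightarrow> int" where
  "wPS p = (-1) ^ (card (fst p) + card (snd p))"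

lemma finite_PS: "finite X \<Longrightarrow> finite Y \<Longrightarrow> finite (PS X Y)"
  by (rule finite_subset[of _ "Pow X \<times> Pow Y"]) (auto simp: PS_def)

lemma PS_fin: "p \<in> PS X Y \<Longrightarrow> finite X \<Longrightarrow> finite Y \<Longrightarrow> finite (fst p) \<and> finite (snd p)"
  by (cases p) (auto simp: PS_def intro: rev_finite_subset)

lemma PS_toggle1:
  assumes X: "finite X" and Y: "finite Y" and x: "x \<in> X"
  shows "sum wPS {p\<in>PS X Y. x \<in> fst p} = - sum wPS {p\<in>PS X Y. x \<notin> fst p \<and> x \<notin> snd p}"
proof -
  have "sum wPS {p\<in>PS X Y. x \<in> fst p} = sum (\<lambda>p. - wPS p) {p\<in>PS X Y. x \<notin> fst p \<and> x \<notin> snd p}"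
    apply (rule sum.reindex_bij_witness[where j = "\<lambda>p. (fst p - {x}, snd p)" and i = "\<lambda>p. (insert x (fst p), snd p)"])
    subgoal for p by (cases p) (auto simp: insert_absorb)
    subgoal for p by (auto simp: PS_def)
    subgoal for p by auto
    subgoal for p using x by (auto simp: PS_def)
    subgoal for p
    proof -
      assume p: "p \<in> {p \<in> PS X Y. x \<in> fst p}"
      have f: "finite (fst p)" using PS_fin[of p X Y] X Y p by auto
      have c: "card (fst p) = Suc (card (fst p - {x}))" using card.remove[OF f] p by auto
      show ?thesis unfolding wPS_def using c by simp
    qed
    done
  thus ?thesis by (simp add: sum_negf)
qed

lemma PS_toggle2:
  assumes X: "finite X" and Y: "finite Y" and x: "x \<in> Y"
  shows "sum wPS {p\<in>PS X Y. x \<in> snd p} = - sum wPS {p\<in>PS X Y. x \<notin> fst p \<and> x \<notin> snd p}"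
proof -
  have "sum wPS {p\<in>PS X Y. x \<in> snd p} = sum (\<lambda>p. - wPS p) {p\<in>PS X Y. x \<notin> fst p \<and> x \<notin> snd p}"
    apply (rule sum.reindex_bij_witness[where j = "\<lambda>p. (fst p, snd p - {x})" and i = "\<lambda>p. (fst p, insert x (snd p))"])
    subgoal for p by (cases p) (auto simp: insert_absorb)
    subgoal for p by (auto simp: PS_def)
    subgoal for p by auto
    subgoal for p using x by (auto simp: PS_def)
    subgoal for p
    proof -
      assume p: "p \<in> {p \<in> PS X Y. x \<in> snd p}"
      have f: "finite (snd p)" using PS_fin[of p X Y] X Y p by auto
      have c: "card (snd p) = Suc (card (snd p - {x}))" using card.remove[OF f] p by auto
      show ?thesis unfolding wPS_def using c by simp
    qed
    done
  thus ?thesis by (simp add: sum_negf)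
qed

lemma PS_split:
  assumes X: "finite X" and Y: "finite Y"
  shows "sum wPS (PS X Y) = sum wPS {p\<in>PS X Y. x \<notin> fst p \<and> x \<notin> snd p} + sum wPS {p\<in>PS X Y. x \<in> fst p}
           + sum wPS {p\<in>PS X Y. x \<in> snd p}"
proof -
  have f: "finite (PS X Y)" using finite_PS[OF X Y] .
  have "PS X Y = ({p\<in>PS X Y. x \<notin> fst p \<and> x \<notin> snd p} \<union> {p\<in>PS X Y. x \<in> fst p}) \<union> {p\<in>PS X Y. x \<in> snd p}"
    by auto
  also have "sum wPS \<dots> = sum wPS ({p\<in>PS X Y. x \<notin> fst p \<and> x \<notin> snd p} \<union> {p\<in>PS X Y. x \<in> fst p}) + sum wPS {p\<in>PS X Y. x \<in> snd p}"
    by (rule sum.union_disjoint) (use f in \<open>auto simp: PS_def\<close>)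
  also have "sum wPS ({p\<in>PS X Y. x \<notin> fst p \<and> x \<notin> snd p} \<union> {p\<in>PS X Y. x \<in> fst p}) =
       sum wPS {p\<in>PS X Y. x \<notin> fst p \<and> x \<notin> snd p} + sum wPS {p\<in>PS X Y. x \<in> fst p}"
    by (rule sum.union_disjoint) (use f in auto)
  finally show ?thesis .
qed

lemma PS_zero:
  assumes X: "finite X" and Y: "finite Y" and ne: "X \<noteq> Y"
  shows "sum wPS (PS X Y) = 0"
proof -
  obtain x where "x \<in> X - Y \<or> x \<in> Y - X" using ne by blast
  thus ?thesis
  proof
    assume x: "x \<in> X - Y"
    have "{p\<in>PS X Y. x \<in> snd p} = {}" using x by (auto simp: PS_def)
    hence "sum wPS {p\<in>PS X Y. x \<in> snd p} = 0" by (simp only: sum.empty)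
    thus ?thesis using PS_split[OF X Y, of x] PS_toggle1[OF X Y, of x] x by simp
  next
    assume x: "x \<in> Y - X"
    have "{p\<in>PS X Y. x \<in> fst p} = {}" using x by (auto simp: PS_def)
    hence "sum wPS {p\<in>PS X Y. x \<in> fst p} = 0" by (simp only: sum.empty)
    thus ?thesis using PS_split[OF X Y, of x] PS_toggle2[OF X Y, of x] x by simp
  qed
qed

lemma PS_same:
  assumes X: "finite X"
  shows "sum wPS (PS X X) = (-1) ^ card X"
  using X
proof (induction "card X" arbitrary: X)
  case 0
  hence X: "X = {}" by simp
  have P: "PS {} {} = {({}, {})}" by (auto simp: PS_def)
  show ?case unfolding X P by (simp add: wPS_def)
next
  case (Suc n)
  then obtain x where x: "x \<in> X" by (metis card_eq_0_iff empty_iff nat.distinct(1) ex_in_conv)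
  have A0: "{p\<in>PS X X. x \<notin> fst p \<and> x \<notin> snd p} = PS (X - {x}) (X - {x})" by (auto simp: PS_def)
  have c: "card (X - {x}) = n" using Suc x by simp
  have "sum wPS (PS X X) = - sum wPS (PS (X - {x}) (X - {x}))"
    using PS_split[OF Suc(3) Suc(3), of x] PS_toggle1[OF Suc(3) Suc(3) x] PS_toggle2[OF Suc(3) Suc(3) x] A0 by simp
  also have "\<dots> = (-1) ^ Suc n"
  proof -
    have "sum wPS (PS (X - {x}) (X - {x})) = (-1) ^ n" using Suc(1)[of "X - {x}"] c Suc(3) by simp
    thus ?thesis by simp
  qed
  also have "\<dots> = (-1) ^ card X" using Suc(2) by simp
  finally show ?case .
qed

lemma PS_val: "finite X \<Longrightarrow> finite Y \<Longrightarrow> sum wPS (PS X Y) = (if X = Y then (-1) ^ card X else 0)"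
  using PS_same PS_zero by auto

lemma finite_P1: "finite U \<Longrightarrow> finite (P1 G om U)"
  by (rule finite_subset[of _ "Pow U \<times> Pow U"]) (auto simp: P1_def PS_def sinkU_def srcU_def)

lemma top_reindex:
  assumes U: "finite U" and ori: "is_orientation G om"
  shows "(\<Sum>\<kappa>\<in>{\<kappa>\<in>PK G om U. lev U \<kappa> \<ge> 1}. g \<kappa>) =
    (\<Sum>p\<in>P1 G om U. \<Sum>\<kappa>'\<in>PK G om (U - fst p - snd p). g (extL (fst p) (snd p) (lev (U - fst p - snd p) \<kappa>' + 1) \<kappa>'))"
proof -
  have "(\<Sum>p\<in>P1 G om U. \<Sum>\<kappa>'\<in>PK G om (U - fst p - snd p). g (extL (fst p) (snd p) (lev (U - fst p - snd p) \<kappa>' + 1) \<kappa>'))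
     = (\<Sum>(p, \<kappa>')\<in>Sigma (P1 G om U) (\<lambda>p. PK G om (U - fst p - snd p)). g (extL (fst p) (snd p) (lev (U - fst p - snd p) \<kappa>' + 1) \<kappa>'))"
    by (rule sum.Sigma) (use finite_P1[OF U] U in \<open>auto intro: finite_PK\<close>)
  also have "\<dots> = (\<Sum>\<kappa>\<in>{\<kappa>\<in>PK G om U. lev U \<kappa> \<ge> 1}. g \<kappa>)"
  proof -
    have A: "extL (topS U \<kappa>) (topB U \<kappa>) (lev (U - topS U \<kappa> - topB U \<kappa>) (rest U \<kappa>) + 1) (rest U \<kappa>) = \<kappa>
       \<and> ((topS U \<kappa>, topB U \<kappa>), rest U \<kappa>) \<in> Sigma (P1 G om U) (\<lambda>p. PK G om (U - fst p - snd p))"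
      if k: "\<kappa> \<in> {\<kappa> \<in> PK G om U. 1 \<le> lev U \<kappa>}" for \<kappa>
    proof -
      have kP: "\<kappa> \<in> PK G om U" and L: "1 \<le> lev U \<kappa>" using k by auto
      note r = rest_PK[OF U kP L]
      have kg: "good G om U \<kappa>" using kP by (simp add: PK_def)
      have "(topS U \<kappa>, topB U \<kappa>) \<in> P1 G om U"
      proof -
        have "topS U \<kappa> \<inter> topB U \<kappa> = {}" using L by (auto simp: topS_def topB_def)
        moreover have "topS U \<kappa> \<union> topB U \<kappa> \<noteq> {}"
        proof -
          obtain v where "v \<in> U" "\<bar>\<kappa> v\<bar> = lev U \<kappa>" using lev_attained[OF U, of \<kappa>] L by auto
          thus ?thesis by (auto simp: topS_def topB_def abs_if split: if_splits)
        qed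
        ultimately show ?thesis using topS_sink[OF U kg] topB_src[OF U kg] by (auto simp: P1_def PS_def)
      qed
      thus ?thesis using r by simp
    qed
    have B: "topS U (extL (fst p) (snd p) (lev (U - fst p - snd p) \<kappa>' + 1) \<kappa>') = fst p \<and>
             topB U (extL (fst p) (snd p) (lev (U - fst p - snd p) \<kappa>' + 1) \<kappa>') = snd p \<and>
             rest U (extL (fst p) (snd p) (lev (U - fst p - snd p) \<kappa>' + 1) \<kappa>') = \<kappa>' \<and>
             extL (fst p) (snd p) (lev (U - fst p - snd p) \<kappa>' + 1) \<kappa>' \<in> {\<kappa> \<in> PK G om U. 1 \<le> lev U \<kappa>}"
      if b: "(p, \<kappa>') \<in> Sigma (P1 G om U) (\<lambda>p. PK G om (U - fst p - snd p))" for p \<kappa>'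
    proof -
      obtain S B where pp[simp]: "p = (S, B)" by fastforce
      have p: "(S, B) \<in> P1 G om U" and k': "\<kappa>' \<in> PK G om (U - S - B)" using b by auto
      note e = ext_PK[OF U ori p k']
      show ?thesis using e lev_nonneg[of "U - S - B" \<kappa>'] U by simp
    qed
    show ?thesis
      apply (rule sum.reindex_bij_witness[where i = "\<lambda>\<kappa>. ((topS U \<kappa>, topB U \<kappa>), rest U \<kappa>)"
        and j = "\<lambda>(p, \<kappa>'). extL (fst p) (snd p) (lev (U - fst p - snd p) \<kappa>' + 1) \<kappa>'"])
      subgoal for a using B[of "fst a" "snd a"] by auto
      subgoal for a using B[of "fst a" "snd a"] by auto
      subgoal for b using A[of b] by auto
      subgoal for b using A[of b] by auto
      subgoal for a by auto
      done
  qed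
  finally show ?thesis by simp
qed

lemma m1sq: "((-1::int) ^ n) * (-1) ^ n = 1"
  by (simp flip: power_add)
lemma m1split: "a = b + c \<Longrightarrow> (-1::int) ^ b = (-1) ^ a * (-1) ^ c"
  by (simp add: power_add mult.assoc m1sq)

lemma PK_lev0:
  assumes U: "finite U"
  shows "PK G om U - {\<kappa>. 1 \<le> lev U \<kappa>} = (if EI G U = {} then {\<lambda>_. 0} else {})"
proof -
  have z: "\<kappa> = (\<lambda>_. 0)" if "\<kappa> \<in> PK G om U" "\<not> 1 \<le> lev U \<kappa>" for \<kappa>
  proof
    fix v
    show "\<kappa> v = 0"
    proof (cases "v \<in> U")
      case True thus ?thesis using lev_ge[OF U True, of \<kappa>] that by simp
    next
      case False thus ?thesis using that by (simp add: PK_def good_def)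
    qed
  qed
  have l0: "lev U (\<lambda>_. 0) = 0" by (rule lev_eqI[OF U]) auto
  show ?thesis
  proof (cases "EI G U = {}")
    case True
    have mem: "(\<lambda>_. 0) \<in> PK G om U" using True l0 by (simp add: PK_def good_def packed_def)
    have "PK G om U - {\<kappa>. 1 \<le> lev U \<kappa>} = {\<lambda>_. 0}"
    proof (intro equalityI subsetI)
      fix \<kappa> assume "\<kappa> \<in> PK G om U - {\<kappa>. 1 \<le> lev U \<kappa>}" thus "\<kappa> \<in> {\<lambda>_. 0}" using z by blast
    next
      fix \<kappa> :: "'a \<Rightarrow> int" assume "\<kappa> \<in> {\<lambda>_. 0}" thus "\<kappa> \<in> PK G om U - {\<kappa>. 1 \<le> lev U \<kappa>}" using mem l0 by simp
    qed
    thus ?thesis using True by simp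
  next
    case False
    then obtain e where e: "e \<in> EI G U" by blast
    have "\<kappa> \<notin> PK G om U" if "\<kappa> = (\<lambda>_. 0)" for \<kappa>
      using e that by (auto simp: PK_def good_def sgnmul_def)
    hence "PK G om U - {\<kappa>. 1 \<le> lev U \<kappa>} = {}" using z by blast
    thus ?thesis using False by simp
  qed
qed

theorem EE_val:
  assumes ac: "acyclic_orientation G om" and U: "finite U"
  shows "EE G om U = (-1) ^ card U"
  using U
proof (induction "card U" arbitrary: U rule: less_induct)
  case less
  have U: "finite U" by fact
  have ori: "is_orientation G om" using ac by (simp add: acyclic_orientation_def)
  define c where "c = (-1::int) ^ card U"
  have split: "EE G om U = (\<Sum>\<kappa>\<in>{\<kappa>\<in>PK G om U. lev U \<kappa> \<ge> 1}. (-1::int) ^ nat (lev U \<kappa>))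
      + (\<Sum>\<kappa>\<in>PK G om U - {\<kappa>. 1 \<le> lev U \<kappa>}. (-1::int) ^ nat (lev U \<kappa>))"
  proof -
    have eq: "PK G om U \<inter> {\<kappa>. 1 \<le> lev U \<kappa>} = {\<kappa>\<in>PK G om U. lev U \<kappa> \<ge> 1}" by auto
    have "EE G om U = (\<Sum>\<kappa>\<in>PK G om U \<inter> {\<kappa>. 1 \<le> lev U \<kappa>}. (-1::int) ^ nat (lev U \<kappa>))
      + (\<Sum>\<kappa>\<in>PK G om U - {\<kappa>. 1 \<le> lev U \<kappa>}. (-1::int) ^ nat (lev U \<kappa>))"
      unfolding EE_def by (rule sum.Int_Diff[OF finite_PK[OF U]])
    thus ?thesis unfolding eq .
  qed
  have zero: "(\<Sum>\<kappa>\<in>PK G om U - {\<kappa>. 1 \<le> lev U \<kappa>}. (-1::int) ^ nat (lev U \<kappa>)) = (if EI G U = {} then 1 else 0)"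
  proof -
    have l0: "lev U (\<lambda>_. 0) = 0" by (rule lev_eqI[OF U]) auto
    show ?thesis unfolding PK_lev0[OF U] using l0 by simp
  qed
  have top: "(\<Sum>\<kappa>\<in>{\<kappa>\<in>PK G om U. lev U \<kappa> \<ge> 1}. (-1::int) ^ nat (lev U \<kappa>)) =
      (\<Sum>p\<in>P1 G om U. - ((-1) ^ card (U - fst p - snd p)))"
  proof -
    have "(\<Sum>\<kappa>\<in>{\<kappa>\<in>PK G om U. lev U \<kappa> \<ge> 1}. (-1::int) ^ nat (lev U \<kappa>)) =
      (\<Sum>p\<in>P1 G om U. \<Sum>\<kappa>'\<in>PK G om (U - fst p - snd p). (-1::int) ^ nat (lev U (extL (fst p) (snd p) (lev (U - fst p - snd p) \<kappa>' + 1) \<kappa>')))"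
      by (rule top_reindex[OF U ori])
    also have "\<dots> = (\<Sum>p\<in>P1 G om U. - EE G om (U - fst p - snd p))"
    proof (rule sum.cong[OF refl])
      fix p assume p: "p \<in> P1 G om U"
      obtain S B where pp[simp]: "p = (S, B)" by fastforce
      have "(\<Sum>\<kappa>'\<in>PK G om (U - S - B). (-1::int) ^ nat (lev U (extL S B (lev (U - S - B) \<kappa>' + 1) \<kappa>'))) =
            (\<Sum>\<kappa>'\<in>PK G om (U - S - B). - ((-1::int) ^ nat (lev (U - S - B) \<kappa>')))"
      proof (rule sum.cong[OF refl])
        fix \<kappa>' assume k': "\<kappa>' \<in> PK G om (U - S - B)"
        have "lev U (extL S B (lev (U - S - B) \<kappa>' + 1) \<kappa>') = lev (U - S - B) \<kappa>' + 1"
          using ext_PK(2)[OF U ori _ k'] p by simp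
        moreover have "0 \<le> lev (U - S - B) \<kappa>'" by (rule lev_nonneg) (use U in simp)
        ultimately show "(-1::int) ^ nat (lev U (extL S B (lev (U - S - B) \<kappa>' + 1) \<kappa>')) = - ((-1::int) ^ nat (lev (U - S - B) \<kappa>'))"
          by (simp add: nat_add_distrib)
      qed
      thus "(\<Sum>\<kappa>'\<in>PK G om (U - fst p - snd p). (-1::int) ^ nat (lev U (extL (fst p) (snd p) (lev (U - fst p - snd p) \<kappa>' + 1) \<kappa>'))) =
            - EE G om (U - fst p - snd p)" by (simp add: EE_def sum_negf)
    qed
    also have "\<dots> = (\<Sum>p\<in>P1 G om U. - ((-1) ^ card (U - fst p - snd p)))"
    proof (rule sum.cong[OF refl])
      fix p assume p: "p \<in> P1 G om U"
      have ss: "fst p \<union> snd p \<subseteq> U" "fst p \<union> snd p \<noteq> {}" using p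
        by (auto simp: P1_def PS_def sinkU_def srcU_def)
      have "U - fst p - snd p \<subset> U" using ss by blast
      hence "card (U - fst p - snd p) < card U" using U by (intro psubset_card_mono)
      thus "- EE G om (U - fst p - snd p) = - ((-1) ^ card (U - fst p - snd p))"
        using less(1)[of "U - fst p - snd p"] U by simp
    qed
    finally show ?thesis .
  qed
  have top2: "(\<Sum>p\<in>P1 G om U. - ((-1::int) ^ card (U - fst p - snd p))) = - c * (sum wPS (PS (sinkU G om U) (srcU G om U)) - 1)"
  proof -
    have "(\<Sum>p\<in>P1 G om U. - ((-1::int) ^ card (U - fst p - snd p))) = (\<Sum>p\<in>P1 G om U. - c * wPS p)"
    proof (rule sum.cong[OF refl])
      fix p assume p: "p \<in> P1 G om U"
      have ss: "fst p \<subseteq> U" "snd p \<subseteq> U" "fst p \<inter> snd p = {}" using p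
        by (auto simp: P1_def PS_def sinkU_def srcU_def)
      have "card U = card (U - fst p - snd p) + (card (fst p) + card (snd p))"
      proof -
        have fX: "finite (fst p \<union> snd p)" using U ss by (auto intro: finite_subset)
        have "U - fst p - snd p = U - (fst p \<union> snd p)" by blast
        hence "card (U - fst p - snd p) = card U - card (fst p \<union> snd p)"
          using card_Diff_subset[OF fX] ss by simp
        moreover have "card (fst p \<union> snd p) \<le> card U" using ss U by (intro card_mono) auto
        ultimately have "card U = card (U - fst p - snd p) + card (fst p \<union> snd p)" by simp
        moreover have "card (fst p \<union> snd p) = card (fst p) + card (snd p)"
          using ss U by (intro card_Un_disjoint) (auto intro: finite_subset)
        ultimately show ?thesis by simp
      qed
      thus "- ((-1::int) ^ card (U - fst p - snd p)) = - c * wPS p"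
        unfolding c_def wPS_def by (subst m1split) auto
    qed
    also have "\<dots> = - c * sum wPS (P1 G om U)" by (simp add: sum_distrib_left)
    also have "sum wPS (P1 G om U) = sum wPS (PS (sinkU G om U) (srcU G om U)) - 1"
    proof -
      have fin: "finite (PS (sinkU G om U) (srcU G om U))"
        using U by (intro finite_PS) (auto simp: sinkU_def srcU_def)
      have "({}, {}) \<in> PS (sinkU G om U) (srcU G om U)" by (simp add: PS_def)
      from sum.remove[OF fin this, of wPS] show ?thesis by (simp add: P1_def wPS_def)
    qed
    finally show ?thesis .
  qed
  have fs: "finite (sinkU G om U)" "finite (srcU G om U)" using U by (auto simp: sinkU_def srcU_def)
  show ?case
  proof (cases "EI G U = {}")
    case True
    hence "sinkU G om U = U" "srcU G om U = U" by (auto simp: sinkU_def srcU_def)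
    hence "sum wPS (PS (sinkU G om U) (srcU G om U)) = c" using PS_val[OF fs] by (simp add: c_def)
    hence "EE G om U = 1 - c * (c - 1)" using split zero top top2 True by simp
    also have "\<dots> = c" using m1sq[of "card U"] by (simp add: c_def algebra_simps)
    finally show ?thesis by (simp add: c_def)
  next
    case False
    obtain v where v: "v \<in> U" "\<exists>e\<in>EI G U. \<exists>h. endp G e h = v"
      "(\<forall>e\<in>EI G U. \<forall>h. endp G e h = v \<longrightarrow> om e h) \<or> (\<forall>e\<in>EI G U. \<forall>h. endp G e h = v \<longrightarrow> \<not> om e h)"
      using noSS[OF ac U False] by blast
    have "sinkU G om U \<noteq> srcU G om U"
    proof
      assume eq: "sinkU G om U = srcU G om U"
      from v(3) have "v \<in> sinkU G om U \<and> v \<in> srcU G om U"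
        using v(1) eq by (auto simp: sinkU_def srcU_def) 
      then show False using v(2) by (auto simp: sinkU_def srcU_def)
    qed
    hence "sum wPS (PS (sinkU G om U) (srcU G om U)) = 0" using PS_val[OF fs] by simp
    hence "EE G om U = c" using split zero top top2 False by simp
    thus ?thesis by (simp add: c_def)
  qed
qed

definition levm :: "int multiset \<Rightarrow> int" where
  "levm m = Max (insert 0 (abs ` set_mset m))"

definition packedm :: "int multiset \<Rightarrow> bool" where
  "packedm m \<longleftrightarrow> (\<forall>j. 1 \<le> j \<longrightarrow> j \<le> levm m \<longrightarrow> (j \<in># m \<or> - j \<in># m))"

definition tt :: "rat poly" where "tt = [:0, 1:]"

definition Wt :: "nat \<Rightarrow> int multiset \<Rightarrow> rat poly" where
  "Wt n m = (if size m = n \<and> packedm m then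
      (-1) ^ (n + nat (levm m)) +
      (if 1 \<le> levm m \<and> - levm m \<notin># m
       then (tt - 1) ^ (count m (levm m)) * (-1) ^ (n - count m (levm m) + nat (levm m - 1)) else 0)
    else 0)"

definition Phi :: "nat \<Rightarrow> series \<Rightarrow> rat poly" where
  "Phi n f = (\<Sum>m\<in>multisets_of_size {- int n..int n} n. smult (f m) (Wt n m))"

lemma EI_V: "wf_sgraph G \<Longrightarrow> EI G (verts G) = edges G"
  by (auto simp: EI_def wf_sgraph_def)

lemma good_V: "wf_sgraph G \<Longrightarrow> good G om (verts G) \<kappa> \<longleftrightarrow> proper G \<kappa> \<and> preserves G om \<kappa>"
  unfolding good_def EI_V proper_def preserves_def by blast

lemma sinkU_V: "wf_sgraph G \<Longrightarrow> sinkU G om (verts G) = sinks G om"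
  unfolding sinkU_def sinks_def EI_V by blast

lemma mono_facts:
  fixes \<kappa> :: "'v \<Rightarrow> int" and V :: "'v set"
  assumes V: "finite V"
  defines "m \<equiv> image_mset \<kappa> (mset_set V)"
  shows "size m = card V" "set_mset m = \<kappa> ` V" "count m x = card {v\<in>V. \<kappa> v = x}"
    "levm m = lev V \<kappa>" "packedm m \<longleftrightarrow> packed V \<kappa>"
proof -
  show "size m = card V" by (simp add: m_def)
  show sm: "set_mset m = \<kappa> ` V" using V by (simp add: m_def)
  have "count m x = (\<Sum>y\<in>\<kappa> -` {x} \<inter> V. 1)" using V by (simp add: m_def count_image_mset)
  also have "\<dots> = card {v\<in>V. \<kappa> v = x}" by (simp add: Int_commute vimage_def Collect_conj_eq)
  finally show "count m x = card {v\<in>V. \<kappa> v = x}" .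
  show lv: "levm m = lev V \<kappa>" by (simp add: levm_def lev_def sm image_image)
  have eq: "(j \<in> \<kappa> ` V \<or> - j \<in> \<kappa> ` V) \<longleftrightarrow> (\<exists>v\<in>V. \<bar>\<kappa> v\<bar> = j)" if j: "1 \<le> j" for j
  proof
    assume "j \<in> \<kappa> ` V \<or> - j \<in> \<kappa> ` V"
    then obtain v where "v \<in> V" "\<kappa> v = j \<or> \<kappa> v = - j" by auto
    thus "\<exists>v\<in>V. \<bar>\<kappa> v\<bar> = j" using j by (intro bexI[of _ v]) auto
  next
    assume "\<exists>v\<in>V. \<bar>\<kappa> v\<bar> = j"
    then obtain v where v: "v \<in> V" "\<bar>\<kappa> v\<bar> = j" by blast
    hence "\<kappa> v = j \<or> \<kappa> v = - j" by (auto simp: abs_if split: if_splits)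
    thus "j \<in> \<kappa> ` V \<or> - j \<in> \<kappa> ` V" using v(1) by (metis image_eqI)
  qed
  show "packedm m \<longleftrightarrow> packed V \<kappa>"
    unfolding packedm_def packed_def lv sm using eq by simp
qed

lemma sum_pow_Pow: "finite A \<Longrightarrow> (\<Sum>X\<in>Pow A. (x::'a::comm_ring_1) ^ card X) = (x + 1) ^ card A"
proof -
  assume A: "finite A"
  have "(\<Prod>a\<in>A. x + 1) = (\<Sum>X\<in>Pow A. (\<Prod>a\<in>X. x) * (\<Prod>a\<in>A - X. 1))"
    by (rule prod_add[OF A])
  thus ?thesis by simp
qed

lemma finite_funs_bounded:
  assumes V: "finite V"
  shows "finite {\<kappa>::'v \<Rightarrow> int. \<forall>x. (x \<in> V \<longrightarrow> \<kappa> x \<in> {-c..c}) \<and> (x \<notin> V \<longrightarrow> \<kappa> x = 0)}"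
  by (intro finite_set_of_finite_funs V) simp

lemma Phi_Y_sum:
  fixes G :: "('v, 'e) sgraph" and om :: "'e \<Rightarrow> bool \<Rightarrow> bool" and n :: nat
  assumes wf: "wf_sgraph G"
  defines "C \<equiv> {\<kappa>. proper G \<kappa> \<and> preserves G om \<kappa> \<and> monomial_of G \<kappa> \<in> multisets_of_size {- int n..int n} n}"
  shows "Phi n (Yfun G om) = (\<Sum>\<kappa>\<in>C. Wt n (monomial_of G \<kappa>))"
proof -
  let ?Ms = "multisets_of_size {- int n..int n} n"
  have V: "finite (verts G)" using wf by (simp add: wf_sgraph_def)
  have finC: "finite C"
  proof (rule finite_subset[OF _ finite_funs_bounded[OF V, of "int n"]], safe)
    fix \<kappa> x assume k: "\<kappa> \<in> C"
    { assume "x \<in> verts G"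
      hence "\<kappa> x \<in> set_mset (monomial_of G \<kappa>)" using V by (simp add: monomial_of_def)
      thus "\<kappa> x \<in> {- int n..int n}" using k by (auto simp: C_def multisets_of_size_def) }
    { assume "x \<notin> verts G" thus "\<kappa> x = 0" using k by (simp add: C_def proper_def) }
  qed
  have finMs: "finite ?Ms" by (intro finite_multisets_of_size) simp
  have "(\<Sum>\<kappa>\<in>C. Wt n (monomial_of G \<kappa>)) = (\<Sum>m\<in>?Ms. \<Sum>\<kappa>\<in>{\<kappa>\<in>C. monomial_of G \<kappa> = m}. Wt n (monomial_of G \<kappa>))"
    by (rule sum.group[symmetric, OF finC finMs]) (auto simp: C_def)
  also have "\<dots> = (\<Sum>m\<in>?Ms. smult (Yfun G om m) (Wt n m))"
  proof (rule sum.cong[OF refl])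
    fix m assume m: "m \<in> ?Ms"
    have "{\<kappa>\<in>C. monomial_of G \<kappa> = m} = {\<kappa>. proper G \<kappa> \<and> preserves G om \<kappa> \<and> monomial_of G \<kappa> = m}"
      using m by (auto simp: C_def)
    hence "(\<Sum>\<kappa>\<in>{\<kappa>\<in>C. monomial_of G \<kappa> = m}. Wt n (monomial_of G \<kappa>)) =
           (\<Sum>\<kappa>\<in>{\<kappa>. proper G \<kappa> \<and> preserves G om \<kappa> \<and> monomial_of G \<kappa> = m}. Wt n m)"
      by (intro sum.cong) auto
    also have "\<dots> = of_nat (card {\<kappa>. proper G \<kappa> \<and> preserves G om \<kappa> \<and> monomial_of G \<kappa> = m}) * Wt n m"
      by simp
    also have "\<dots> = smult (Yfun G om m) (Wt n m)"
      by (simp add: Yfun_def of_nat_mult_conv_smult)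
    finally show "(\<Sum>\<kappa>\<in>{\<kappa>\<in>C. monomial_of G \<kappa> = m}. Wt n (monomial_of G \<kappa>)) = smult (Yfun G om m) (Wt n m)" .
  qed
  finally show ?thesis by (simp add: Phi_def)
qed

lemma m1sqp: "((-1::rat poly) ^ n) * (-1) ^ n = 1"
  by (simp flip: power_add)

lemma P1_empty_sum:
  assumes U: "finite U"
  shows "(\<Sum>p\<in>P1 G om U. if snd p = {} then f (fst p) else 0) = (\<Sum>S\<in>Pow (sinkU G om U) - {{}}. f S)"
proof -
  have fin: "finite (P1 G om U)" by (rule finite_P1[OF U])
  have "(\<Sum>p\<in>P1 G om U. if snd p = {} then f (fst p) else 0) = (\<Sum>p\<in>{p\<in>P1 G om U. snd p = {}}. f (fst p))"
    by (rule sum.inter_filter[OF fin, symmetric])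
  also have "{p\<in>P1 G om U. snd p = {}} = (\<lambda>S. (S, {})) ` (Pow (sinkU G om U) - {{}})"
    by (auto simp: P1_def PS_def image_iff)
  also have "(\<Sum>p\<in>(\<lambda>S. (S, {})) ` (Pow (sinkU G om U) - {{}}). f (fst p)) = (\<Sum>S\<in>Pow (sinkU G om U) - {{}}. f S)"
    by (subst sum.reindex) (auto simp: inj_on_def)
  finally show ?thesis .
qed

lemma PhiY:
  fixes G :: "('v, 'e) sgraph" and om :: "'e \<Rightarrow> bool \<Rightarrow> bool" and n :: nat
  assumes wf: "wf_sgraph G" and ac: "acyclic_orientation G om"
  shows "Phi n (Yfun G om) = (if n = card (verts G) then tt ^ card (sinks G om) else 0)"
proof -
  define V where "V = verts G"
  have V: "finite V" using wf by (simp add: wf_sgraph_def V_def)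
  have ori: "is_orientation G om" using ac by (simp add: acyclic_orientation_def)
  define C where "C = {\<kappa>. proper G \<kappa> \<and> preserves G om \<kappa> \<and> monomial_of G \<kappa> \<in> multisets_of_size {- int n..int n} n}"
  have P: "Phi n (Yfun G om) = (\<Sum>\<kappa>\<in>C. Wt n (monomial_of G \<kappa>))" unfolding C_def by (rule Phi_Y_sum[OF wf])
  have finC: "finite C"
  proof (rule finite_subset[OF _ finite_funs_bounded[OF V, of "int n"]], safe)
    fix \<kappa> x assume k: "\<kappa> \<in> C"
    { assume "x \<in> V"
      hence "\<kappa> x \<in> set_mset (monomial_of G \<kappa>)" using V by (simp add: monomial_of_def V_def)
      thus "\<kappa> x \<in> {- int n..int n}" using k by (auto simp: C_def multisets_of_size_def) }
    { assume "x \<notin> V" thus "\<kappa> x = 0" using k by (simp add: C_def proper_def V_def) }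
  qed
  note mf = mono_facts[OF V, folded monomial_of_def[of G, unfolded V_def[symmetric]]]
  have mono: "monomial_of G \<kappa> = image_mset \<kappa> (mset_set V)" for \<kappa> by (simp add: monomial_of_def V_def)
  show ?thesis
  proof (cases "n = card V")
    case False
    have "Wt n (monomial_of G \<kappa>) = 0" for \<kappa> using False mono_facts(1)[OF V, of \<kappa>] by (simp add: Wt_def mono)
    thus ?thesis using P False by (simp add: V_def)
  next
    case True
    have sub: "PK G om V \<subseteq> C"
    proof
      fix \<kappa> assume k: "\<kappa> \<in> PK G om V"
      have pp: "proper G \<kappa> \<and> preserves G om \<kappa>" using k good_V[OF wf] by (simp add: PK_def V_def)
      have "set_mset (monomial_of G \<kappa>) \<subseteq> {- int n..int n}"
      proof
        fix x assume "x \<in> set_mset (monomial_of G \<kappa>)"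
        then obtain v where v: "v \<in> V" "x = \<kappa> v" using mono_facts(2)[OF V, of \<kappa>] by (auto simp: mono)
        have "\<bar>\<kappa> v\<bar> \<le> lev V \<kappa>" by (rule lev_ge[OF V v(1)])
        also have "\<dots> \<le> int (card V)" using lev_packed_card[OF V] k by (simp add: PK_def)
        finally show "x \<in> {- int n..int n}" using v True by auto
      qed
      moreover have "size (monomial_of G \<kappa>) = n" using True mono_facts(1)[OF V, of \<kappa>] by (simp add: mono)
      ultimately show "\<kappa> \<in> C" using pp by (simp add: C_def multisets_of_size_def)
    qed
    have zero: "Wt n (monomial_of G \<kappa>) = 0" if "\<kappa> \<in> C - PK G om V" for \<kappa>
    proof -
      have "good G om V \<kappa>" using that good_V[OF wf] by (simp add: C_def V_def)
      hence "\<not> packed V \<kappa>" using that by (simp add: PK_def)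
      thus ?thesis using mono_facts(5)[OF V, of \<kappa>] by (simp add: Wt_def mono)
    qed
    have "Phi n (Yfun G om) = (\<Sum>\<kappa>\<in>PK G om V. Wt n (monomial_of G \<kappa>))"
      unfolding P by (rule sum.mono_neutral_right[OF finC sub]) (use zero in blast)
    also have "\<dots> = (\<Sum>\<kappa>\<in>PK G om V. (-1) ^ n * (-1) ^ nat (lev V \<kappa>) +
        (if 1 \<le> lev V \<kappa> \<and> topB V \<kappa> = {} then (tt - 1) ^ card (topS V \<kappa>) * (-1) ^ (n - card (topS V \<kappa>) + nat (lev V \<kappa> - 1)) else 0))"
    proof (rule sum.cong[OF refl])
      fix \<kappa> assume k: "\<kappa> \<in> PK G om V"
      have pk: "packedm (monomial_of G \<kappa>)" using k mono_facts(5)[OF V, of \<kappa>] by (simp add: PK_def mono)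
      have sz: "size (monomial_of G \<kappa>) = n" using True mono_facts(1)[OF V, of \<kappa>] by (simp add: mono)
      have lv: "levm (monomial_of G \<kappa>) = lev V \<kappa>" using mono_facts(4)[OF V, of \<kappa>] by (simp add: mono)
      have ct: "count (monomial_of G \<kappa>) (lev V \<kappa>) = card (topS V \<kappa>)"
        using mono_facts(3)[OF V, of \<kappa>] by (simp add: mono topS_def)
      have sm: "set_mset (monomial_of G \<kappa>) = \<kappa> ` V" using mono_facts(2)[OF V, of \<kappa>] by (simp add: mono)
      have nb1: "(- lev V \<kappa> \<notin># monomial_of G \<kappa>) \<longleftrightarrow> - lev V \<kappa> \<notin> \<kappa> ` V" by (simp add: sm)
      have nb2: "(- lev V \<kappa> \<notin> \<kappa> ` V) \<longleftrightarrow> topB V \<kappa> = {}" unfolding topB_def by (auto simp: image_iff)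
      note nb = nb1 nb2
      show "Wt n (monomial_of G \<kappa>) = (-1) ^ n * (-1) ^ nat (lev V \<kappa>) +
        (if 1 \<le> lev V \<kappa> \<and> topB V \<kappa> = {} then (tt - 1) ^ card (topS V \<kappa>) * (-1) ^ (n - card (topS V \<kappa>) + nat (lev V \<kappa> - 1)) else 0)"
        unfolding Wt_def using pk sz lv ct nb by (simp add: power_add)
    qed
    also have "\<dots> = (-1) ^ n * (\<Sum>\<kappa>\<in>PK G om V. (-1) ^ nat (lev V \<kappa>)) +
        (\<Sum>\<kappa>\<in>PK G om V. if 1 \<le> lev V \<kappa> \<and> topB V \<kappa> = {} then (tt - 1) ^ card (topS V \<kappa>) * (-1) ^ (n - card (topS V \<kappa>) + nat (lev V \<kappa> - 1)) else 0)"
      by (simp add: sum.distrib sum_distrib_left)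
    also have "(\<Sum>\<kappa>\<in>PK G om V. (-1::rat poly) ^ nat (lev V \<kappa>)) = of_int (EE G om V)"
      by (simp add: EE_def)
    also have "\<dots> = (-1) ^ n" using EE_val[OF ac V] True by simp
    also have "(\<Sum>\<kappa>\<in>PK G om V. if 1 \<le> lev V \<kappa> \<and> topB V \<kappa> = {} then (tt - 1) ^ card (topS V \<kappa>) * (-1) ^ (n - card (topS V \<kappa>) + nat (lev V \<kappa> - 1)) else 0)
        = (\<Sum>\<kappa>\<in>{\<kappa>\<in>PK G om V. lev V \<kappa> \<ge> 1}. if topB V \<kappa> = {} then (tt - 1) ^ card (topS V \<kappa>) * (-1) ^ (n - card (topS V \<kappa>) + nat (lev V \<kappa> - 1)) else 0)"
      by (subst sum.inter_filter[OF finite_PK[OF V]]) (auto intro: sum.cong)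
    also have "\<dots> = (\<Sum>p\<in>P1 G om V. \<Sum>\<kappa>'\<in>PK G om (V - fst p - snd p).
         (\<lambda>\<kappa>. if topB V \<kappa> = {} then (tt - 1) ^ card (topS V \<kappa>) * (-1) ^ (n - card (topS V \<kappa>) + nat (lev V \<kappa> - 1)) else 0)
           (extL (fst p) (snd p) (lev (V - fst p - snd p) \<kappa>' + 1) \<kappa>'))"
      by (rule top_reindex[OF V ori])
    also have "\<dots> = (\<Sum>p\<in>P1 G om V. if snd p = {} then (tt - 1) ^ card (fst p) else 0)"
    proof (rule sum.cong[OF refl])
      fix p assume p: "p \<in> P1 G om V"
      obtain S B where pp[simp]: "p = (S, B)" by fastforce
      have SV: "S \<subseteq> V" using p by (auto simp: P1_def PS_def sinkU_def)
      have "(\<Sum>\<kappa>'\<in>PK G om (V - S - B).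
         (\<lambda>\<kappa>. if topB V \<kappa> = {} then (tt - 1) ^ card (topS V \<kappa>) * (-1) ^ (n - card (topS V \<kappa>) + nat (lev V \<kappa> - 1)) else 0)
           (extL S B (lev (V - S - B) \<kappa>' + 1) \<kappa>')) =
         (\<Sum>\<kappa>'\<in>PK G om (V - S - B). if B = {} then (tt - 1) ^ card S * ((-1) ^ (n - card S) * (-1) ^ nat (lev (V - S - B) \<kappa>')) else 0)"
      proof (rule sum.cong[OF refl])
        fix \<kappa>' assume k': "\<kappa>' \<in> PK G om (V - S - B)"
        have pSB: "(S, B) \<in> P1 G om V" using p by simp
        note e = ext_PK[OF V ori pSB k']
        have l0: "0 \<le> lev (V - S - B) \<kappa>'" by (rule lev_nonneg) (use V in simp)
        show "(\<lambda>\<kappa>. if topB V \<kappa> = {} then (tt - 1) ^ card (topS V \<kappa>) * (-1) ^ (n - card (topS V \<kappa>) + nat (lev V \<kappa> - 1)) else 0)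
           (extL S B (lev (V - S - B) \<kappa>' + 1) \<kappa>') =
           (if B = {} then (tt - 1) ^ card S * ((-1) ^ (n - card S) * (-1) ^ nat (lev (V - S - B) \<kappa>')) else 0)"
          unfolding e(2,3,4) using l0 by (simp add: power_add)
      qed
      also have "\<dots> = (if B = {} then (tt - 1) ^ card S * ((-1) ^ (n - card S) * of_int (EE G om (V - S - B))) else 0)"
        by (simp add: EE_def sum_distrib_left)
      also have "\<dots> = (if B = {} then (tt - 1) ^ card S else 0)"
      proof -
        have "card (V - S) = n - card S" using True SV V by (simp add: card_Diff_subset finite_subset)
        thus ?thesis using EE_val[OF ac, of "V - S"] V m1sqp[of "n - card S"] by simp
      qed
      finally show "(\<Sum>\<kappa>'\<in>PK G om (V - fst p - snd p).
         (\<lambda>\<kappa>. if topB V \<kappa> = {} then (tt - 1) ^ card (topS V \<kappa>) * (-1) ^ (n - card (topS V \<kappa>) + nat (lev V \<kappa> - 1)) else 0)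
           (extL (fst p) (snd p) (lev (V - fst p - snd p) \<kappa>' + 1) \<kappa>')) = (if snd p = {} then (tt - 1) ^ card (fst p) else 0)"
        unfolding pp fst_conv snd_conv .
    qed
    also have "\<dots> = (\<Sum>S\<in>Pow (sinkU G om V) - {{}}. (tt - 1) ^ card S)"
      by (rule P1_empty_sum[OF V])
    also have "\<dots> = tt ^ card (sinkU G om V) - 1"
    proof -
      have fs: "finite (sinkU G om V)" using V by (auto simp: sinkU_def)
      have "(\<Sum>S\<in>Pow (sinkU G om V). (tt - 1) ^ card S) = 1 + (\<Sum>S\<in>Pow (sinkU G om V) - {{}}. (tt - 1) ^ card S)"
        by (subst sum.remove[of _ "{}"]) (use fs in auto)
      thus ?thesis using sum_pow_Pow[OF fs, of "tt - 1"] by simp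
    qed
    finally have "Phi n (Yfun G om) = (-1) ^ n * (-1) ^ n + (tt ^ card (sinkU G om V) - 1)" .
    thus ?thesis using True m1sqp[of n] sinkU_V[OF wf, of om] by (simp add: V_def)
  qed
qed

definition omk :: "('v, 'e) sgraph \<Rightarrow> ('v \<Rightarrow> int) \<Rightarrow> 'e \<Rightarrow> bool \<Rightarrow> bool" where
  "omk G \<kappa> e h = (e \<in> edges G \<and> \<kappa> (endp G e h) > sgnmul G e (\<kappa> (endp G e (\<not> h))))"

lemma closed_walk_endp:
  assumes "closed_walk G vs es" "e \<in> set es"
  shows "endp G e h \<in> set vs"
proof -
  obtain i where i: "i < length es" "e = es ! i" using assms(2) by (auto simp: in_set_conv_nth)
  have l: "length vs = length es" using assms(1) by (simp add: closed_walk_def)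
  have "Suc i mod length es < length es" using i(1) by (intro mod_less_divisor) linarith
  hence a: "vs ! i \<in> set vs" "vs ! (Suc i mod length es) \<in> set vs" using i(1) l by auto
  have "ends G e = (vs ! i, vs ! (Suc i mod length es)) \<or> ends G e = (vs ! (Suc i mod length es), vs ! i)"
    using assms(1) i unfolding closed_walk_def by blast
  thus ?thesis using a by (cases h) auto
qed

lemma omk_acyclic:
  assumes wf: "wf_sgraph G" and pr: "proper G \<kappa>"
  shows "acyclic_orientation G (omk G \<kappa>)"
  unfolding acyclic_orientation_def
proof (intro conjI notI)
  show "is_orientation G (omk G \<kappa>)"
    unfolding is_orientation_def
  proof (intro conjI ballI allI impI)
    fix e assume e: "e \<in> edges G"
    have p: "\<kappa> (fst (ends G e)) \<noteq> sgnmul G e (\<kappa> (snd (ends G e)))" using pr e by (simp add: proper_def)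
    { assume "pos G e" thus "omk G \<kappa> e True \<noteq> omk G \<kappa> e False" using e p by (auto simp: omk_def sgnmul_def) }
    { assume "\<not> pos G e" thus "omk G \<kappa> e True = omk G \<kappa> e False" using e p by (auto simp: omk_def sgnmul_def) }
  next
    fix e assume "e \<notin> edges G" thus "omk G \<kappa> e = (\<lambda>_. False)" by (auto simp: omk_def)
  qed
next
  assume "\<exists>vs es. is_cycle G (omk G \<kappa>) vs es"
  then obtain vs es where cy: "is_cycle G (omk G \<kappa>) vs es" by blast
  have cw: "closed_walk G vs es" using cy by (simp add: is_cycle_def)
  have ne: "set vs \<noteq> {}" using cw by (auto simp: closed_walk_def)
  define M where "M = Max ((\<lambda>v. \<bar>\<kappa> v\<bar>) ` set vs)"
  have "M \<in> (\<lambda>v. \<bar>\<kappa> v\<bar>) ` set vs" unfolding M_def using ne by (intro Max_in) auto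
  then obtain w where w: "w \<in> set vs" "\<bar>\<kappa> w\<bar> = M" by auto
  have le: "\<bar>\<kappa> v\<bar> \<le> M" if "v \<in> set vs" for v unfolding M_def using that by (intro Max_ge) auto
  obtain e1 h1 where e1: "e1 \<in> set es" "endp G e1 h1 = w" "omk G \<kappa> e1 h1" using cy w(1) by (auto simp: is_cycle_def)
  obtain e2 h2 where e2: "e2 \<in> set es" "endp G e2 h2 = w" "\<not> omk G \<kappa> e2 h2" using cy w(1) by (auto simp: is_cycle_def)
  have E: "e1 \<in> edges G" "e2 \<in> edges G" using cw e1(1) e2(1) by (auto simp: closed_walk_def)
  have u1: "\<bar>\<kappa> (endp G e1 (\<not> h1))\<bar> \<le> M" using le closed_walk_endp[OF cw e1(1)] by blast
  have u2: "\<bar>\<kappa> (endp G e2 (\<not> h2))\<bar> \<le> M" using le closed_walk_endp[OF cw e2(1)] by blast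
  have p2: "\<kappa> (endp G e2 h2) \<noteq> sgnmul G e2 (\<kappa> (endp G e2 (\<not> h2)))"
    using pr E(2) proper_sym[of \<kappa> G e2 h2] by (simp add: proper_def)
  have a1: "\<kappa> w > sgnmul G e1 (\<kappa> (endp G e1 (\<not> h1)))" using e1 E by (simp add: omk_def)
  have a2: "\<kappa> w < sgnmul G e2 (\<kappa> (endp G e2 (\<not> h2)))" using e2 E p2 by (auto simp: omk_def)
  have s1: "\<bar>sgnmul G e1 (\<kappa> (endp G e1 (\<not> h1)))\<bar> \<le> M" using u1 by (simp add: sgnmul_abs)
  have s2: "\<bar>sgnmul G e2 (\<kappa> (endp G e2 (\<not> h2)))\<bar> \<le> M" using u2 by (simp add: sgnmul_abs)
  have "sgnmul G e2 (\<kappa> (endp G e2 (\<not> h2))) \<le> M" "- M \<le> sgnmul G e1 (\<kappa> (endp G e1 (\<not> h1)))"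
    using s1 s2 by (simp_all add: abs_le_iff)
  hence "\<kappa> w < M" "- M < \<kappa> w" using a1 a2 by simp_all
  hence "\<bar>\<kappa> w\<bar> < M" by (simp only: abs_less_iff) simp
  thus False using w(2) by simp
qed

lemma omk_preserves: "preserves G (omk G \<kappa>) \<kappa>"
  unfolding preserves_def omk_def by blast

lemma preserves_unique:
  assumes "is_orientation G om" "preserves G om \<kappa>"
  shows "om = omk G \<kappa>"
proof (intro ext)
  fix e h
  show "om e h = omk G \<kappa> e h"
  proof (cases "e \<in> edges G")
    case True thus ?thesis using assms(2) by (simp add: preserves_def omk_def)
  next
    case False thus ?thesis using assms(1) by (simp add: is_orientation_def omk_def)
  qed
qed

lemma finite_AO: assumes wf: "wf_sgraph G" shows "finite {om. acyclic_orientation G om}"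
proof -
  have E: "finite (edges G)" using wf by (simp add: wf_sgraph_def)
  have "{om. acyclic_orientation G om} \<subseteq> {om. \<forall>x. (x \<in> edges G \<longrightarrow> om x \<in> UNIV) \<and> (x \<notin> edges G \<longrightarrow> om x = (\<lambda>_. False))}"
    by (auto simp: acyclic_orientation_def is_orientation_def)
  moreover have "finite \<dots>" by (intro finite_set_of_finite_funs E) simp
  ultimately show ?thesis by (rule finite_subset)
qed

lemma Xfun_sum:
  assumes wf: "wf_sgraph G"
  shows "Xfun G m = (\<Sum>om\<in>{om. acyclic_orientation G om}. Yfun G om m)"
proof -
  let ?AO = "{om. acyclic_orientation G om}"
  let ?A = "\<lambda>om. {\<kappa>. proper G \<kappa> \<and> preserves G om \<kappa> \<and> monomial_of G \<kappa> = m}"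
  have V: "finite (verts G)" using wf by (simp add: wf_sgraph_def)
  have finK: "finite {\<kappa>. proper G \<kappa> \<and> monomial_of G \<kappa> = m}"
  proof (rule finite_subset[OF _ finite_set_of_finite_funs[OF V, of "set_mset m" 0]])
    show "{\<kappa>. proper G \<kappa> \<and> monomial_of G \<kappa> = m} \<subseteq> {f. \<forall>x. (x \<in> verts G \<longrightarrow> f x \<in> set_mset m) \<and> (x \<notin> verts G \<longrightarrow> f x = 0)}"
      using V by (auto simp: proper_def monomial_of_def)
  qed simp
  have eq: "{\<kappa>. proper G \<kappa> \<and> monomial_of G \<kappa> = m} = (\<Union>om\<in>?AO. ?A om)"
  proof (intro equalityI subsetI)
    fix \<kappa> assume k: "\<kappa> \<in> {\<kappa>. proper G \<kappa> \<and> monomial_of G \<kappa> = m}"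
    hence "omk G \<kappa> \<in> ?AO" "\<kappa> \<in> ?A (omk G \<kappa>)" using omk_acyclic[OF wf] omk_preserves by auto
    thus "\<kappa> \<in> (\<Union>om\<in>?AO. ?A om)" by blast
  next
    fix \<kappa> assume "\<kappa> \<in> (\<Union>om\<in>?AO. ?A om)"
    then obtain om where "\<kappa> \<in> ?A om" by blast
    thus "\<kappa> \<in> {\<kappa>. proper G \<kappa> \<and> monomial_of G \<kappa> = m}" by simp
  qed
  have "card {\<kappa>. proper G \<kappa> \<and> monomial_of G \<kappa> = m} = (\<Sum>om\<in>?AO. card (?A om))"
    unfolding eq
  proof (rule card_UN_disjoint[OF finite_AO[OF wf]])
    show "\<forall>om\<in>?AO. finite (?A om)"
    proof
      fix om show "finite (?A om)" by (rule finite_subset[OF _ finK]) auto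
    qed
    show "\<forall>om1\<in>?AO. \<forall>om2\<in>?AO. om1 \<noteq> om2 \<longrightarrow> ?A om1 \<inter> ?A om2 = {}"
    proof (intro ballI impI equalityI subsetI)
      fix om1 om2 \<kappa> assume o: "om1 \<in> ?AO" "om2 \<in> ?AO" "om1 \<noteq> om2" and k: "\<kappa> \<in> ?A om1 \<inter> ?A om2"
      have "om1 = omk G \<kappa>" using o(1) k by (intro preserves_unique) (auto simp: acyclic_orientation_def)
      moreover have "om2 = omk G \<kappa>" using o(2) k by (intro preserves_unique) (auto simp: acyclic_orientation_def)
      ultimately show "\<kappa> \<in> {}" using o(3) by simp
    qed simp
  qed
  thus ?thesis by (simp add: Xfun_def Yfun_def)
qed

lemma transfer:
  fixes G :: "('v, 'e) sgraph" and iv :: "'v \<Rightarrow> nat" and ie :: "'e \<Rightarrow> nat"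
  assumes wf: "wf_sgraph G" and ac: "acyclic_orientation G om"
    and iiv: "inj_on iv (verts G)" and iie: "inj_on ie (edges G)"
  defines "gv \<equiv> inv_into (verts G) iv" and "ge \<equiv> inv_into (edges G) ie"
  defines "G' \<equiv> (\<lparr>verts = iv ` verts G, edges = ie ` edges G,
      ends = (\<lambda>e'. map_prod iv iv (ends G (ge e'))), pos = (\<lambda>e'. pos G (ge e'))\<rparr> :: (nat, nat) sgraph)"
    and "om' \<equiv> (\<lambda>e' h. e' \<in> ie ` edges G \<and> om (ge e') h)"
  shows "signed_poset G' om' \<and> Yfun G' om' = Yfun G om"
proof -
  define V where "V = verts G"
  define E where "E = edges G"
  have finV: "finite V" and finE: "finite E" using wf by (auto simp: wf_sgraph_def V_def E_def)
  have gvi: "gv (iv v) = v" if "v \<in> V" for v using iiv that by (simp add: gv_def V_def)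
  have gei: "ge (ie e) = e" if "e \<in> E" for e using iie that by (simp add: ge_def E_def)
  have ige: "ie (ge e') = e'" "ge e' \<in> E" if "e' \<in> ie ` E" for e'
    using that by (auto simp: ge_def E_def f_inv_into_f inv_into_into)
  have igv: "iv (gv x) = x" "gv x \<in> V" if "x \<in> iv ` V" for x
    using that by (auto simp: gv_def V_def f_inv_into_f inv_into_into)
  have sim[simp]: "verts G' = iv ` V" "edges G' = ie ` E" "ends G' e' = map_prod iv iv (ends G (ge e'))"
    "pos G' e' = pos G (ge e')" for e' by (simp_all add: G'_def V_def E_def)
  have endp': "endp G' e' h = iv (endp G (ge e') h)" for e' h by (cases h) simp_all
  have sgn': "sgnmul G' e' x = sgnmul G (ge e') x" for e' x by (simp add: sgnmul_def)
  have endV: "endp G e h \<in> V" if "e \<in> E" for e h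
    using wf that by (cases h) (auto simp: wf_sgraph_def V_def E_def)
  have om'i: "om' (ie e) h = om e h" if "e \<in> E" for e h using that gei by (auto simp: om'_def E_def)
  have ori: "is_orientation G om" using ac by (simp add: acyclic_orientation_def)
  have wf': "wf_sgraph G'"
    unfolding wf_sgraph_def using finV finE endV[of _ True] endV[of _ False] ige(2)
    by (auto simp: wf_sgraph_def)
  have ori': "is_orientation G' om'"
    unfolding is_orientation_def
  proof (intro conjI ballI allI impI)
    fix e' assume e': "e' \<in> edges G'"
    hence e: "ge e' \<in> E" and eq: "e' = ie (ge e')" using ige by auto
    have "om' e' h = om (ge e') h" for h using om'i[OF e] eq by metis
    moreover have "(pos G (ge e') \<longrightarrow> om (ge e') True \<noteq> om (ge e') False) \<and>
                   (\<not> pos G (ge e') \<longrightarrow> om (ge e') True = om (ge e') False)"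
      using ori e by (simp add: is_orientation_def E_def)
    ultimately show "pos G' e' \<Longrightarrow> om' e' True \<noteq> om' e' False" "\<not> pos G' e' \<Longrightarrow> om' e' True = om' e' False"
      by simp_all
  next
    fix e' assume "e' \<notin> edges G'" thus "om' e' = (\<lambda>_. False)" by (auto simp: om'_def E_def)
  qed
  have acyc': "\<not> (\<exists>vs es. is_cycle G' om' vs es)"
  proof
    assume "\<exists>vs es. is_cycle G' om' vs es"
    then obtain vs es where cy: "is_cycle G' om' vs es" by blast
    have cw: "closed_walk G' vs es" using cy by (simp add: is_cycle_def)
    have esE: "set es \<subseteq> ie ` E" using cw by (simp add: closed_walk_def)
    define vs0 where "vs0 = map gv vs"
    define es0 where "es0 = map ge es"
    have cw0: "closed_walk G vs0 es0"
      unfolding closed_walk_def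
    proof (intro conjI allI impI)
      show "length vs0 = length es0" "es0 \<noteq> []" using cw by (auto simp: vs0_def es0_def closed_walk_def)
      show "set es0 \<subseteq> edges G" using esE ige(2) by (auto simp: es0_def E_def)
    next
      fix i assume i: "i < length es0"
      have l: "length vs = length es" using cw by (simp add: closed_walk_def)
      have i': "i < length es" using i by (simp add: es0_def)
      have ei: "es ! i \<in> ie ` E" using esE i' by auto
      have j: "Suc i mod length es < length es" using i' by (intro mod_less_divisor) linarith
      have c: "ends G' (es ! i) = (vs ! i, vs ! (Suc i mod length es)) \<or> ends G' (es ! i) = (vs ! (Suc i mod length es), vs ! i)"
        using cw i' by (simp add: closed_walk_def)
      have fV: "fst (ends G (ge (es ! i))) \<in> V" "snd (ends G (ge (es ! i))) \<in> V"
        using endV[OF ige(2)[OF ei], of True] endV[OF ige(2)[OF ei], of False] by simp_all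
      have "ends G (ge (es ! i)) = (gv (vs ! i), gv (vs ! (Suc i mod length es))) \<or>
            ends G (ge (es ! i)) = (gv (vs ! (Suc i mod length es)), gv (vs ! i))"
      proof -
        let ?x = "ends G (ge (es ! i))"
        have ee: "?x = (gv (iv (fst ?x)), gv (iv (snd ?x)))" using gvi fV by simp
        from c show ?thesis
        proof
          assume c1: "ends G' (es ! i) = (vs ! i, vs ! (Suc i mod length es))"
          hence "iv (fst ?x) = vs ! i" "iv (snd ?x) = vs ! (Suc i mod length es)" by (simp_all add: prod_eq_iff)
          hence "?x = (gv (vs ! i), gv (vs ! (Suc i mod length es)))" using ee by simp
          thus ?thesis ..
        next
          assume c1: "ends G' (es ! i) = (vs ! (Suc i mod length es), vs ! i)"
          hence "iv (fst ?x) = vs ! (Suc i mod length es)" "iv (snd ?x) = vs ! i" by (simp_all add: prod_eq_iff)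
          hence "?x = (gv (vs ! (Suc i mod length es)), gv (vs ! i))" using ee by simp
          thus ?thesis ..
        qed
      qed
      thus "ends G (es0 ! i) = (vs0 ! i, vs0 ! (Suc i mod length es0)) \<or>
            ends G (es0 ! i) = (vs0 ! (Suc i mod length es0), vs0 ! i)"
        using i' j l by (simp add: vs0_def es0_def)
    qed
    have "is_cycle G om vs0 es0"
      unfolding is_cycle_def
    proof (intro conjI ballI cw0)
      fix w assume "w \<in> set vs0"
      then obtain x where x: "x \<in> set vs" "w = gv x" by (auto simp: vs0_def)
      have both: "\<exists>e\<in>set es0. \<exists>h. endp G e h = w \<and> om e h = b"
        if "\<exists>e'\<in>set es. \<exists>h. endp G' e' h = x \<and> om' e' h = b" for b
      proof -
        from that obtain e' h where e': "e' \<in> set es" "endp G' e' h = x" "om' e' h = b" by blast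
        have ei: "e' \<in> ie ` E" using esE e'(1) by auto
        have "x = iv (endp G (ge e') h)" using e'(2) endp' by simp
        hence "gv x = endp G (ge e') h" using gvi endV[OF ige(2)[OF ei], of h] by simp
        hence "endp G (ge e') h = w" using x(2) by simp
        moreover have "om (ge e') h = b" using e'(3) ei by (simp add: om'_def E_def)
        moreover have "ge e' \<in> set es0" using e'(1) by (simp add: es0_def)
        ultimately show ?thesis by blast
      qed
      have "\<exists>e'\<in>set es. \<exists>h. endp G' e' h = x \<and> om' e' h = True"
        "\<exists>e'\<in>set es. \<exists>h. endp G' e' h = x \<and> om' e' h = False" using cy x(1) by (auto simp: is_cycle_def)
      from both[OF this(1)] both[OF this(2)]
      show "\<exists>e\<in>set es0. \<exists>h. endp G e h = w \<and> om e h" "\<exists>e\<in>set es0. \<exists>h. endp G e h = w \<and> \<not> om e h" by auto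
    qed
    thus False using ac by (auto simp: acyclic_orientation_def)
  qed
  have sp: "signed_poset G' om'" using wf' ori' acyc' by (simp add: signed_poset_def acyclic_orientation_def)
  have relP: "(\<forall>e'\<in>edges G'. \<kappa>' (fst (ends G' e')) \<noteq> sgnmul G' e' (\<kappa>' (snd (ends G' e')))) \<longleftrightarrow>
              (\<forall>e\<in>edges G. \<kappa> (fst (ends G e)) \<noteq> sgnmul G e (\<kappa> (snd (ends G e))))"
    and relQ: "preserves G' om' \<kappa>' \<longleftrightarrow> preserves G om \<kappa>"
    and relM: "monomial_of G' \<kappa>' = monomial_of G \<kappa>"
    if r: "\<forall>v\<in>V. \<kappa>' (iv v) = \<kappa> v" for \<kappa> \<kappa>'
  proof -
    have ke: "\<kappa>' (endp G' (ie e) h) = \<kappa> (endp G e h)" if "e \<in> E" for e h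
      using r endV[OF that, of h] by (simp add: endp' gei[OF that])
    have kf: "\<kappa>' (fst (ends G' (ie e))) = \<kappa> (fst (ends G e))" "\<kappa>' (snd (ends G' (ie e))) = \<kappa> (snd (ends G e))"
      if "e \<in> E" for e using ke[OF that, of True] ke[OF that, of False] by simp_all
    have sg: "sgnmul G' (ie e) x = sgnmul G e x" if "e \<in> E" for e x using sgn' gei[OF that] by simp
    show "(\<forall>e'\<in>edges G'. \<kappa>' (fst (ends G' e')) \<noteq> sgnmul G' e' (\<kappa>' (snd (ends G' e')))) \<longleftrightarrow>
              (\<forall>e\<in>edges G. \<kappa> (fst (ends G e)) \<noteq> sgnmul G e (\<kappa> (snd (ends G e))))"
      using kf sg by (simp add: E_def)
    show "preserves G' om' \<kappa>' \<longleftrightarrow> preserves G om \<kappa>"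
      unfolding preserves_def using ke sg om'i by (simp add: E_def)
    have "monomial_of G' \<kappa>' = image_mset \<kappa>' (image_mset iv (mset_set V))"
      using iiv by (simp add: monomial_of_def image_mset_mset_set V_def)
    also have "\<dots> = image_mset (\<kappa>' \<circ> iv) (mset_set V)" by (simp add: multiset.map_comp)
    also have "\<dots> = image_mset \<kappa> (mset_set V)" using r finV by (intro image_mset_cong) simp
    finally show "monomial_of G' \<kappa>' = monomial_of G \<kappa>" by (simp add: monomial_of_def V_def)
  qed
  have "Yfun G' om' m = Yfun G om m" for m
  proof -
    let ?A = "{\<kappa>. proper G \<kappa> \<and> preserves G om \<kappa> \<and> monomial_of G \<kappa> = m}"
    let ?A' = "{\<kappa>'. proper G' \<kappa>' \<and> preserves G' om' \<kappa>' \<and> monomial_of G' \<kappa>' = m}"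
    define T where "T = (\<lambda>\<kappa>::'v \<Rightarrow> int. \<lambda>x. if x \<in> iv ` V then \<kappa> (gv x) else 0)"
    define S where "S = (\<lambda>\<kappa>'::nat \<Rightarrow> int. \<lambda>v. if v \<in> V then \<kappa>' (iv v) else 0)"
    have rT: "\<forall>v\<in>V. T \<kappa> (iv v) = \<kappa> v" for \<kappa> using gvi by (simp add: T_def)
    have rS: "\<forall>v\<in>V. \<kappa>' (iv v) = S \<kappa>' v" for \<kappa>' by (simp add: S_def)
    have "bij_betw T ?A ?A'"
    proof (rule bij_betw_byWitness[where f' = S])
      show "\<forall>a\<in>?A. S (T a) = a"
      proof
        fix \<kappa> assume "\<kappa> \<in> ?A"
        hence z: "\<forall>v. v \<notin> V \<longrightarrow> \<kappa> v = 0" by (simp add: proper_def V_def)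
        show "S (T \<kappa>) = \<kappa>" using z rT by (auto simp: S_def)
      qed
      show "\<forall>a'\<in>?A'. T (S a') = a'"
      proof
        fix \<kappa>' assume "\<kappa>' \<in> ?A'"
        hence z: "\<forall>x. x \<notin> iv ` V \<longrightarrow> \<kappa>' x = 0" by (simp add: proper_def)
        show "T (S \<kappa>') = \<kappa>'"
        proof
          fix x show "T (S \<kappa>') x = \<kappa>' x" using z igv[of x] by (auto simp: T_def S_def)
        qed
      qed
      show "T ` ?A \<subseteq> ?A'"
      proof
        fix y assume "y \<in> T ` ?A"
        then obtain \<kappa> where k: "\<kappa> \<in> ?A" "y = T \<kappa>" by blast
        have zT: "\<forall>x. x \<notin> verts G' \<longrightarrow> T \<kappa> x = 0" by (simp add: T_def)
        have p2: "\<forall>e\<in>edges G. \<kappa> (fst (ends G e)) \<noteq> sgnmul G e (\<kappa> (snd (ends G e)))" using k by (simp add: proper_def)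
        have "\<forall>e'\<in>edges G'. T \<kappa> (fst (ends G' e')) \<noteq> sgnmul G' e' (T \<kappa> (snd (ends G' e')))"
          using relP[OF rT[of \<kappa>]] p2 by blast
        hence "proper G' (T \<kappa>)" using zT unfolding proper_def by blast
        thus "y \<in> ?A'" using k relQ[OF rT[of \<kappa>]] relM[OF rT[of \<kappa>]] by simp
      qed
      show "S ` ?A' \<subseteq> ?A"
      proof
        fix y assume "y \<in> S ` ?A'"
        then obtain \<kappa>' where k: "\<kappa>' \<in> ?A'" "y = S \<kappa>'" by blast
        have zS: "\<forall>x. x \<notin> verts G \<longrightarrow> S \<kappa>' x = 0" by (simp add: S_def V_def)
        have p2: "\<forall>e'\<in>edges G'. \<kappa>' (fst (ends G' e')) \<noteq> sgnmul G' e' (\<kappa>' (snd (ends G' e')))"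
          using k unfolding proper_def by blast
        have "\<forall>e\<in>edges G. S \<kappa>' (fst (ends G e)) \<noteq> sgnmul G e (S \<kappa>' (snd (ends G e)))"
          using relP[OF rS[of \<kappa>']] p2 by blast
        hence "proper G (S \<kappa>')" using zS unfolding proper_def by blast
        thus "y \<in> ?A" using k relQ[OF rS[of \<kappa>']] relM[OF rS[of \<kappa>']] by simp
      qed
    qed
    hence "card ?A' = card ?A" by (simp add: bij_betw_same_card)
    thus ?thesis by (simp add: Yfun_def)
  qed
  thus ?thesis using sp by auto
qed

lemma transfer_ex:
  fixes G :: "('v, 'e) sgraph"
  assumes wf: "wf_sgraph G" and ac: "acyclic_orientation G om"
  shows "\<exists>(G' :: (nat, nat) sgraph) om'. signed_poset G' om' \<and> Yfun G' om' = Yfun G om"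
proof -
  have fv: "finite (verts G)" and fe: "finite (edges G)" using wf by (auto simp: wf_sgraph_def)
  obtain iv :: "'v \<Rightarrow> nat" and n where "iv ` verts G = {i. i < n} \<and> inj_on iv (verts G)"
    using finite_imp_inj_to_nat_seg[OF fv] by blast
  moreover obtain ie :: "'e \<Rightarrow> nat" and n where "ie ` edges G = {i. i < n} \<and> inj_on ie (edges G)"
    using finite_imp_inj_to_nat_seg[OF fe] by blast
  ultimately show ?thesis using transfer[OF wf ac] by blast
qed

lemma Phi_add: "Phi n (\<lambda>m. a m + b m) = Phi n a + Phi n b"
  by (simp add: Phi_def smult_add_left sum.distrib)

lemma Phi_zero: "Phi n (\<lambda>m. 0) = 0"
  by (simp add: Phi_def)

lemma smult_sum_right: "smult c (sum f A) = (\<Sum>i\<in>A. smult c (f i))"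
  by (induction A rule: infinite_finite_induct) (simp_all add: smult_add_right)

lemma Phi_scale: "Phi n (\<lambda>m. c * f m) = smult c (Phi n f)"
  by (simp add: Phi_def smult_sum_right)

lemma Phi_sum_list: "Phi n (\<lambda>m. sum_list (map (\<lambda>x. h x m) xs)) = sum_list (map (\<lambda>x. Phi n (h x)) xs)"
proof (induction xs)
  case Nil thus ?case by (simp add: Phi_zero)
next
  case (Cons x xs)
  have "Phi n (\<lambda>m. sum_list (map (\<lambda>x. h x m) (x # xs))) = Phi n (\<lambda>m. h x m + sum_list (map (\<lambda>x. h x m) xs))"
    by simp
  also have "\<dots> = Phi n (h x) + Phi n (\<lambda>m. sum_list (map (\<lambda>x. h x m) xs))"
    by (rule Phi_add)
  finally show ?case using Cons by simp
qed

lemma Phi_sum: "Phi n (\<lambda>m. \<Sum>x\<in>A. h x m) = (\<Sum>x\<in>A. Phi n (h x))"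
  by (simp add: Phi_def smult_sum sum.swap[of _ A])

lemma sum_list_swap: "sum_list (map (\<lambda>x. \<Sum>n\<in>A. f x n) xs) = (\<Sum>n\<in>A. sum_list (map (\<lambda>x. f x n) xs))"
  by (induction xs) (simp_all add: sum.distrib)

lemma sum_if_eq: "finite A \<Longrightarrow> k \<in> A \<Longrightarrow> (\<Sum>n\<in>A. if n = k then c else 0) = c"
  by (simp add: sum.delta)

lemma target_eq:
  assumes wf: "wf_sgraph G"
  shows "(\<Sum>om\<in>{om. acyclic_orientation G om}. tt ^ card (sinks G om)) =
         (\<Sum>k\<le>card (verts G). monom (of_nat (acyc G k)) k)"
proof -
  let ?AO = "{om. acyclic_orientation G om}"
  have V: "finite (verts G)" using wf by (simp add: wf_sgraph_def)
  have img: "(\<lambda>om. card (sinks G om)) ` ?AO \<subseteq> {..card (verts G)}"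
    using V by (auto simp: sinks_def intro!: card_mono)
  have "(\<Sum>om\<in>?AO. tt ^ card (sinks G om)) =
        (\<Sum>k\<in>{..card (verts G)}. \<Sum>om\<in>{om\<in>?AO. card (sinks G om) = k}. tt ^ card (sinks G om))"
    by (rule sum.group[symmetric, OF finite_AO[OF wf] _ img]) simp
  also have "\<dots> = (\<Sum>k\<le>card (verts G). monom (of_nat (acyc G k)) k)"
  proof (rule sum.cong[OF refl])
    fix k
    have "(\<Sum>om\<in>{om\<in>?AO. card (sinks G om) = k}. tt ^ card (sinks G om)) = (\<Sum>om\<in>{om\<in>?AO. card (sinks G om) = k}. tt ^ k)"
      by (rule sum.cong) auto
    also have "\<dots> = of_nat (acyc G k) * tt ^ k" by (simp add: acyc_def)
    also have "\<dots> = monom (of_nat (acyc G k)) k" by (simp add: monom_altdef tt_def of_nat_mult_conv_smult)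
    finally show "(\<Sum>om\<in>{om\<in>?AO. card (sinks G om) = k}. tt ^ card (sinks G om)) = monom (of_nat (acyc G k)) k" .
  qed
  finally show ?thesis .
qed

lemma Phi_Xfun:
  assumes wf: "wf_sgraph G"
  shows "Phi n (Xfun G) = (if n = card (verts G) then (\<Sum>om\<in>{om. acyclic_orientation G om}. tt ^ card (sinks G om)) else 0)"
proof -
  have "Phi n (Xfun G) = Phi n (\<lambda>m. \<Sum>om\<in>{om. acyclic_orientation G om}. Yfun G om m)"
    using Xfun_sum[OF wf] by presburger
  also have "\<dots> = (\<Sum>om\<in>{om. acyclic_orientation G om}. Phi n (Yfun G om))" by (rule Phi_sum)
  also have "\<dots> = (\<Sum>om\<in>{om. acyclic_orientation G om}. if n = card (verts G) then tt ^ card (sinks G om) else 0)"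
    using PhiY[OF wf] by simp
  finally show ?thesis by simp
qed

lemma rep_value:
  assumes wf: "wf_sgraph G" and r: "is_rep (Xfun G) reps"
  shows "(\<Sum>(c, G', om') \<leftarrow> reps. monom c (card (sinks G' om'))) = (\<Sum>k\<le>card (verts G). monom (of_nat (acyc G k)) k)"
proof -
  define N where "N = card (verts G) + sum_list (map (\<lambda>x. card (verts (fst (snd x)))) reps)"
  have sp: "signed_poset (fst (snd x)) (snd (snd x))" if "x \<in> set reps" for x
    using r that unfolding is_rep_def by (auto simp: split_beta)
  have XF: "Xfun G = (\<lambda>m. sum_list (map (\<lambda>x. fst x * Yfun (fst (snd x)) (snd (snd x)) m) reps))"
    using r unfolding is_rep_def by (simp add: case_prod_unfold)
  have each: "monom (fst x) (card (sinks (fst (snd x)) (snd (snd x)))) =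
      (\<Sum>n\<in>{..N}. smult (fst x) (Phi n (Yfun (fst (snd x)) (snd (snd x)))))" if x: "x \<in> set reps" for x
  proof -
    have w: "wf_sgraph (fst (snd x))" "acyclic_orientation (fst (snd x)) (snd (snd x))"
      using sp[OF x] by (auto simp: signed_poset_def)
    have "card (verts (fst (snd x))) \<in> set (map (\<lambda>x. card (verts (fst (snd x)))) reps)" using x by auto
    hence le: "card (verts (fst (snd x))) \<le> N" unfolding N_def using member_le_sum_list by fastforce
    have "(\<Sum>n\<in>{..N}. smult (fst x) (Phi n (Yfun (fst (snd x)) (snd (snd x))))) =
          (\<Sum>n\<in>{..N}. if n = card (verts (fst (snd x))) then smult (fst x) (tt ^ card (sinks (fst (snd x)) (snd (snd x)))) else 0)"
      using PhiY[OF w] by (intro sum.cong) auto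
    also have "\<dots> = smult (fst x) (tt ^ card (sinks (fst (snd x)) (snd (snd x))))"
      using le by (intro sum_if_eq) auto
    finally show ?thesis by (simp add: monom_altdef tt_def)
  qed
  have "(\<Sum>(c, G', om') \<leftarrow> reps. monom c (card (sinks G' om'))) =
        sum_list (map (\<lambda>x. monom (fst x) (card (sinks (fst (snd x)) (snd (snd x))))) reps)"
    by (simp add: case_prod_unfold)
  also have "\<dots> = sum_list (map (\<lambda>x. \<Sum>n\<in>{..N}. smult (fst x) (Phi n (Yfun (fst (snd x)) (snd (snd x))))) reps)"
    using each by (intro arg_cong[where f = sum_list] map_cong) auto
  also have "\<dots> = (\<Sum>n\<in>{..N}. sum_list (map (\<lambda>x. smult (fst x) (Phi n (Yfun (fst (snd x)) (snd (snd x))))) reps))"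
    by (rule sum_list_swap)
  also have "\<dots> = (\<Sum>n\<in>{..N}. Phi n (Xfun G))"
  proof (rule sum.cong[OF refl])
    fix n
    have "Phi n (Xfun G) = sum_list (map (\<lambda>x. Phi n (\<lambda>m. fst x * Yfun (fst (snd x)) (snd (snd x)) m)) reps)"
      unfolding XF by (rule Phi_sum_list)
    also have "\<dots> = sum_list (map (\<lambda>x. smult (fst x) (Phi n (Yfun (fst (snd x)) (snd (snd x))))) reps)"
      by (simp add: Phi_scale)
    finally show "sum_list (map (\<lambda>x. smult (fst x) (Phi n (Yfun (fst (snd x)) (snd (snd x))))) reps) = Phi n (Xfun G)" by simp
  qed
  also have "\<dots> = (\<Sum>om\<in>{om. acyclic_orientation G om}. tt ^ card (sinks G om))"
    unfolding Phi_Xfun[OF wf] by (intro sum_if_eq) (auto simp: N_def)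
  also have "\<dots> = (\<Sum>k\<le>card (verts G). monom (of_nat (acyc G k)) k)" by (rule target_eq[OF wf])
  finally show ?thesis .
qed

lemma rep_exists:
  assumes wf: "wf_sgraph G"
  shows "\<exists>reps. is_rep (Xfun G) reps"
proof -
  let ?AO = "{om. acyclic_orientation G om}"
  obtain xs where xs: "set xs = ?AO" "distinct xs" using finite_distinct_list[OF finite_AO[OF wf]] by blast
  define rep where "rep = (\<lambda>om. SOME p :: (nat, nat) sgraph \<times> (nat \<Rightarrow> bool \<Rightarrow> bool).
      signed_poset (fst p) (snd p) \<and> Yfun (fst p) (snd p) = Yfun G om)"
  have repP: "signed_poset (fst (rep om)) (snd (rep om)) \<and> Yfun (fst (rep om)) (snd (rep om)) = Yfun G om"
    if omA: "om \<in> ?AO" for om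
  proof -
    have "acyclic_orientation G om" using omA by simp
    then obtain G' :: "(nat, nat) sgraph" and om' where "signed_poset G' om' \<and> Yfun G' om' = Yfun G om"
      using transfer_ex[OF wf] by blast
    hence ex: "\<exists>p :: (nat, nat) sgraph \<times> (nat \<Rightarrow> bool \<Rightarrow> bool). signed_poset (fst p) (snd p) \<and> Yfun (fst p) (snd p) = Yfun G om"
      by (intro exI[of _ "(G', om')"]) simp
    show ?thesis unfolding rep_def by (rule someI_ex[OF ex])
  qed
  define reps :: "poset_term list" where "reps = map (\<lambda>om. (1, fst (rep om), snd (rep om))) xs"
  have "is_rep (Xfun G) reps"
    unfolding is_rep_def
  proof (intro conjI ballI)
    fix t assume "t \<in> set reps"
    then obtain om where "om \<in> ?AO" "t = (1, fst (rep om), snd (rep om))" using xs by (auto simp: reps_def)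
    thus "case t of (c, G, om) \<Rightarrow> signed_poset G om" using repP by (simp add: case_prod_unfold)
  next
    show "Xfun G = (\<lambda>m. \<Sum>(c, G, om)\<leftarrow>reps. c * Yfun G om m)"
    proof
      fix m
      have "(\<Sum>(c, G, om)\<leftarrow>reps. c * Yfun G om m) = sum_list (map (\<lambda>om. Yfun (fst (rep om)) (snd (rep om)) m) xs)"
        by (simp add: reps_def comp_def case_prod_unfold)
      also have "\<dots> = sum_list (map (\<lambda>om. Yfun G om m) xs)"
        using repP xs(1) by (intro arg_cong[where f = sum_list] map_cong) auto
      also have "\<dots> = (\<Sum>om\<in>?AO. Yfun G om m)" using xs by (simp add: sum_list_distinct_conv_sum_set)
      also have "\<dots> = Xfun G m" using Xfun_sum[OF wf] by simp
      finally show "Xfun G m = (\<Sum>(c, G, om)\<leftarrow>reps. c * Yfun G om m)" by simp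
    qed
  qed
  thus ?thesis by blast
qed

theorem theorem6p1:
  fixes G :: "('v, 'e) sgraph"
  assumes "wf_sgraph G"
  shows "Xfun G \<in> YY \<and>
         phi (Xfun G) = (\<Sum>k\<le>card (verts G). monom (of_nat (acyc G k)) k)"
proof
  obtain reps0 where r0: "is_rep (Xfun G) reps0" using rep_exists[OF assms] by blast
  thus "Xfun G \<in> YY" by (auto simp: YY_def)
  show "phi (Xfun G) = (\<Sum>k\<le>card (verts G). monom (of_nat (acyc G k)) k)"
    unfolding phi_def
  proof (rule the_equality)
    show "\<forall>reps. is_rep (Xfun G) reps \<longrightarrow>
      (\<Sum>k\<le>card (verts G). monom (of_nat (acyc G k)) k) = (\<Sum>(c, G, om)\<leftarrow>reps. monom c (card (sinks G om)))"
      using rep_value[OF assms] by simp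
    fix q assume "\<forall>reps. is_rep (Xfun G) reps \<longrightarrow> q = (\<Sum>(c, G, om)\<leftarrow>reps. monom c (card (sinks G om)))"
    hence "q = (\<Sum>(c, G, om)\<leftarrow>reps0. monom c (card (sinks G om)))" using r0 by blast
    thus "q = (\<Sum>k\<le>card (verts G). monom (of_nat (acyc G k)) k)" using rep_value[OF assms r0] by simp
  qed
qed

end
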